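(* Let $R$ be a unital ring and $E$ a directed graph. If $E$ does not satisfy Condition (NE), then there exists an infinite sequence $\{\mu_n\mu_n^*\}_{n\in\mathbb{N}}$, with each $\mu_n$ a path in $E$, of distinct, pairwise orthogonal idempotents in $(L_R(E))_0$. In this case, $(L_R(E))_0$ is neither left nor right noetherian.
   Context: A directed graph $E=(E^0,E^1,s,r)$ has vertex set $E^0$, edge set $E^1$, source and range maps $s,r\colon E^1\to E^0$. A path is a sequence of edges $f_1\cdots f_n$ with $s(f_{i+1})=r(f_i)$, of length $\mathrm{len}=n$; a cycle is a path with $s(f_1)=r(f_n)$ and $s(f_i)\neq s(f_1)$ for $2\le i\le n$; it has an exit if some edge $f$ satisfies $s(f)=s(f_i)$ for some $i$ with $f\neq f_i$. Condition (NE): no cycle has an exit. The Leavitt path algebra $L_R(E)$ is the $R$-algebra generated by $v\in E^0$, $f,f^*$ ($f\in E^1$), with $R$ commuting with generators, subject to $v_iv_j=\delta_{i,j}v_i$; $s(f)f=fr(f)=f$, $r(f)f^*=f^*s(f)=f^*$; $f^*f'=\delta_{f,f'}r(f)$; and $\sum_{s(f)=v}ff^*=v$ whenever $s^{-1}(v)$ is nonempty and finite. For a path $\alpha=f_1\cdots f_n$, $\alpha^*=f_n^*\cdots f_1^*$. Every element of $L_R(E)$ is a finite sum $\sum r_i\alpha_i\beta_i^*$ with $r_i\in R$, $\alpha_i,\beta_i$ paths (vertices allowed as length-0 paths); $(L_R(E))_0$ denotes the degree-zero component of the canonical $\mathbb{Z}$-grading, i.e. the set of such sums with $\mathrm{len}(\alpha_i)=\mathrm{len}(\beta_i)$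 for all $i$. *)

theory Defs
  imports "HOL-Algebra.QuotRing"
begin

definition graph :: "'v set \<Rightarrow> 'e set \<Rightarrow> ('e \<Rightarrow> 'v) \<Rightarrow> ('e \<Rightarrow> 'v) \<Rightarrow> bool" where
  "graph E0 E1 s r \<longleftrightarrow> s ` E1 \<subseteq> E0 \<and> r ` E1 \<subseteq> E0"

definition edge_path :: "'e set \<Rightarrow> ('e \<Rightarrow> 'v) \<Rightarrow> ('e \<Rightarrow> 'v) \<Rightarrow> 'e list \<Rightarrow> bool" where
  "edge_path E1 s r es \<longleftrightarrow> es \<noteq> [] \<and> set es \<subseteq> E1 \<and>
     (\<forall>i. Suc i < length es \<longrightarrow> s (es ! Suc i) = r (es ! i))"

text \<open>A path in general (vertices allowed as paths of length 0) is represented as a pair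
  (v, es): either es = [] and the path is the vertex v, or es is an edge path starting at v.\<close>

definition is_path :: "'v set \<Rightarrow> 'e set \<Rightarrow> ('e \<Rightarrow> 'v) \<Rightarrow> ('e \<Rightarrow> 'v) \<Rightarrow> 'v \<times> 'e list \<Rightarrow> bool" where
  "is_path E0 E1 s r p \<longleftrightarrow> fst p \<in> E0 \<and>
     (snd p = [] \<or> (edge_path E1 s r (snd p) \<and> s (hd (snd p)) = fst p))"

definition plen :: "'v \<times> 'e list \<Rightarrow> nat" where
  "plen p = length (snd p)"

definition is_cycle :: "'e set \<Rightarrow> ('e \<Rightarrow> 'v) \<Rightarrow> ('e \<Rightarrow> 'v) \<Rightarrow> 'e list \<Rightarrow> bool" where
  "is_cycle E1 s r c \<longleftrightarrow> edge_path E1 s r c \<and> s (c ! 0) = r (last c) \<and>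
     (\<forall>i. 0 < i \<and> i < length c \<longrightarrow> s (c ! i) \<noteq> s (c ! 0))"

definition has_exit :: "'e set \<Rightarrow> ('e \<Rightarrow> 'v) \<Rightarrow> 'e list \<Rightarrow> bool" where
  "has_exit E1 s c \<longleftrightarrow> (\<exists>f\<in>E1. \<exists>i<length c. s f = s (c ! i) \<and> f \<noteq> c ! i)"

definition cond_NE :: "'e set \<Rightarrow> ('e \<Rightarrow> 'v) \<Rightarrow> ('e \<Rightarrow> 'v) \<Rightarrow> bool" where
  "cond_NE E1 s r \<longleftrightarrow> (\<forall>c. is_cycle E1 s r c \<longrightarrow> \<not> has_exit E1 s c)"

text \<open>Generators: vertices v, edges f, ghost edges f*.\<close>

datatype ('v, 'e) gen = V 'v | Ed 'e | Gh 'e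

definition gens :: "'v set \<Rightarrow> 'e set \<Rightarrow> ('v, 'e) gen set" where
  "gens E0 E1 = V ` E0 \<union> Ed ` E1 \<union> Gh ` E1"

text \<open>Free (unital) R-algebra on the generators, R commuting with the generators:
  finitely supported coefficient functions on words in the generators, with convolution
  product (the monoid ring of the free monoid over R).\<close>

definition free_alg :: "('r, 'm) ring_scheme \<Rightarrow> 'v set \<Rightarrow> 'e set
    \<Rightarrow> (('v, 'e) gen list \<Rightarrow> 'r) ring" where
  "free_alg R E0 E1 = \<lparr>
     carrier = {x. (\<forall>w. x w \<in> carrier R) \<and> finite {w. x w \<noteq> \<zero>\<^bsub>R\<^esub>}
                   \<and> (\<forall>w. x w \<noteq> \<zero>\<^bsub>R\<^esub> \<longrightarrow> set w \<subseteq> gens E0 E1)},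
     monoid.mult = (\<lambda>x y w. finsum R (\<lambda>(u, v). x u \<otimes>\<^bsub>R\<^esub> y v) {(u, v). u @ v = w}),
     one = (\<lambda>w. if w = [] then \<one>\<^bsub>R\<^esub> else \<zero>\<^bsub>R\<^esub>),
     zero = (\<lambda>w. \<zero>\<^bsub>R\<^esub>),
     add = (\<lambda>x y w. x w \<oplus>\<^bsub>R\<^esub> y w) \<rparr>"

definition wmono :: "('r, 'm) ring_scheme \<Rightarrow> ('v, 'e) gen list \<Rightarrow> 'r \<Rightarrow> (('v, 'e) gen list \<Rightarrow> 'r)" where
  "wmono R w c = (\<lambda>u. if u = w then c else \<zero>\<^bsub>R\<^esub>)"

definition rel2 :: "('r, 'm) ring_scheme \<Rightarrow> ('v, 'e) gen list \<Rightarrow> ('v, 'e) gen list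
    \<Rightarrow> (('v, 'e) gen list \<Rightarrow> 'r)" where
  "rel2 R w1 w2 = (\<lambda>u. if u = w1 then \<one>\<^bsub>R\<^esub> else if u = w2 then \<ominus>\<^bsub>R\<^esub> \<one>\<^bsub>R\<^esub> else \<zero>\<^bsub>R\<^esub>)"

definition ck_rel :: "('r, 'm) ring_scheme \<Rightarrow> 'e set \<Rightarrow> ('e \<Rightarrow> 'v) \<Rightarrow> 'v
    \<Rightarrow> (('v, 'e) gen list \<Rightarrow> 'r)" where
  "ck_rel R E1 s v = (\<lambda>u. if u = [V v] then \<ominus>\<^bsub>R\<^esub> \<one>\<^bsub>R\<^esub>
      else if (\<exists>f\<in>E1. s f = v \<and> u = [Ed f, Gh f]) then \<one>\<^bsub>R\<^esub> else \<zero>\<^bsub>R\<^esub>)"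

definition leavitt_rels :: "('r, 'm) ring_scheme \<Rightarrow> 'v set \<Rightarrow> 'e set \<Rightarrow> ('e \<Rightarrow> 'v) \<Rightarrow> ('e \<Rightarrow> 'v)
    \<Rightarrow> (('v, 'e) gen list \<Rightarrow> 'r) set" where
  "leavitt_rels R E0 E1 s r =
      {wmono R [V v, V u] \<one>\<^bsub>R\<^esub> | v u. v \<in> E0 \<and> u \<in> E0 \<and> v \<noteq> u}
    \<union> {rel2 R [V v, V v] [V v] | v. v \<in> E0}
    \<union> {rel2 R [V (s f), Ed f] [Ed f] | f. f \<in> E1}
    \<union> {rel2 R [Ed f, V (r f)] [Ed f] | f. f \<in> E1}
    \<union> {rel2 R [V (r f), Gh f] [Gh f] | f. f \<in> E1}
    \<union> {rel2 R [Gh f, V (s f)] [Gh f] | f. f \<in> E1}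
    \<union> {rel2 R [Gh f, Ed f] [V (r f)] | f. f \<in> E1}
    \<union> {wmono R [Gh f, Ed g] \<one>\<^bsub>R\<^esub> | f g. f \<in> E1 \<and> g \<in> E1 \<and> f \<noteq> g}
    \<union> {ck_rel R E1 s v | v. v \<in> E0 \<and> {f \<in> E1. s f = v} \<noteq> {} \<and> finite {f \<in> E1. s f = v}}"

definition leavitt_ideal :: "('r, 'm) ring_scheme \<Rightarrow> 'v set \<Rightarrow> 'e set \<Rightarrow> ('e \<Rightarrow> 'v) \<Rightarrow> ('e \<Rightarrow> 'v) \<Rightarrow> (('v, 'e) gen list \<Rightarrow> 'r) set" where
  "leavitt_ideal R E0 E1 s r = genideal (free_alg R E0 E1) (leavitt_rels R E0 E1 s r)"

text \<open>L_R(E), realised inside the quotient of the unital free algebra by the Leavitt relations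
  (L_R(E) is the image of the augmentation ideal; all elements considered below lie in it).\<close>

definition LPA :: "('r, 'm) ring_scheme \<Rightarrow> 'v set \<Rightarrow> 'e set \<Rightarrow> ('e \<Rightarrow> 'v) \<Rightarrow> ('e \<Rightarrow> 'v) \<Rightarrow> (('v, 'e) gen list \<Rightarrow> 'r) set ring" where
  "LPA R E0 E1 s r = free_alg R E0 E1 Quot leavitt_ideal R E0 E1 s r"

definition cls :: "('r, 'm) ring_scheme \<Rightarrow> 'v set \<Rightarrow> 'e set \<Rightarrow> ('e \<Rightarrow> 'v) \<Rightarrow> ('e \<Rightarrow> 'v) \<Rightarrow> (('v, 'e) gen list \<Rightarrow> 'r) \<Rightarrow> (('v, 'e) gen list \<Rightarrow> 'r) set" where
  "cls R E0 E1 s r x = leavitt_ideal R E0 E1 s r +>\<^bsub>free_alg R E0 E1\<^esub> x"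

definition pword :: "'v \<times> 'e list \<Rightarrow> ('v, 'e) gen list" where
  "pword p = (if snd p = [] then [V (fst p)] else map Ed (snd p))"

definition pword_star :: "'v \<times> 'e list \<Rightarrow> ('v, 'e) gen list" where
  "pword_star p = (if snd p = [] then [V (fst p)] else map Gh (rev (snd p)))"

definition LPA0 :: "('r, 'm) ring_scheme \<Rightarrow> 'v set \<Rightarrow> 'e set \<Rightarrow> ('e \<Rightarrow> 'v) \<Rightarrow> ('e \<Rightarrow> 'v) \<Rightarrow> (('v, 'e) gen list \<Rightarrow> 'r) set set" where
  "LPA0 R E0 E1 s r = {cls R E0 E1 s r x | x. \<exists>(n::nat) c a b.
       (\<forall>i<n. c i \<in> carrier R \<and> is_path E0 E1 s r (a i) \<and> is_path E0 E1 s r (b i)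
              \<and> plen (a i) = plen (b i)) \<and>
       x = (\<lambda>w. finsum R (\<lambda>i. if w = pword (a i) @ pword_star (b i) then c i else \<zero>\<^bsub>R\<^esub>) {..<n})}"

definition left_ideal_of where
  "left_ideal_of L S J \<longleftrightarrow> J \<subseteq> S \<and> additive_subgroup J L \<and> (\<forall>x\<in>S. \<forall>a\<in>J. x \<otimes>\<^bsub>L\<^esub> a \<in> J)"

definition right_ideal_of where
  "right_ideal_of L S J \<longleftrightarrow> J \<subseteq> S \<and> additive_subgroup J L \<and> (\<forall>x\<in>S. \<forall>a\<in>J. a \<otimes>\<^bsub>L\<^esub> x \<in> J)"

definition left_noetherian where
  "left_noetherian L S \<longleftrightarrow> (\<forall>J :: nat \<Rightarrow> _ set.
     (\<forall>n. left_ideal_of L S (J n)) \<and> (\<forall>n. J n \<subseteq> J (Suc n)) \<longrightarrow> (\<exists>N. \<forall>n\<ge>N. J n = J N))"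

definition right_noetherian where
  "right_noetherian L S \<longleftrightarrow> (\<forall>J :: nat \<Rightarrow> _ set.
     (\<forall>n. right_ideal_of L S (J n)) \<and> (\<forall>n. J n \<subseteq> J (Suc n)) \<longrightarrow> (\<exists>N. \<forall>n\<ge>N. J n = J N))"

end

theory Submission
  imports Defs
begin

definition Sp :: "'a list \<Rightarrow> ('a list \<times> 'a list) set" where
  "Sp w = {(u, v). u @ v = w}"

lemma Sp_img: "Sp w = (\<lambda>k. (take k w, drop k w)) ` {..length w}"
proof -
  have "(u, v) \<in> (\<lambda>k. (take k w, drop k w)) ` {..length w}" if "u @ v = w" for u v
    using that by (auto intro!: image_eqI[where x="length u"])
  then show ?thesis unfolding Sp_def by auto
qed

lemma finite_Sp[simp]: "finite (Sp w)" by (simp add: Sp_img)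

lemma Sp_disj: "w \<noteq> w' \<Longrightarrow> Sp w \<inter> Sp w' = {}"
  unfolding Sp_def by auto

definition supp :: "('r, 'm) ring_scheme \<Rightarrow> ('a \<Rightarrow> 'r) \<Rightarrow> 'a set" where
  "supp R x = {w. x w \<noteq> \<zero>\<^bsub>R\<^esub>}"

context ring
begin

lemma finsum_prod:
  assumes "finite A" "finite B" "\<And>u v. u \<in> A \<Longrightarrow> v \<in> B \<Longrightarrow> f (u, v) \<in> carrier R"
  shows "finsum R f (A \<times> B) = finsum R (\<lambda>u. finsum R (\<lambda>v. f (u, v)) B) A"
proof -
  have "A \<times> B = (\<Union>u\<in>A. {u} \<times> B)" by auto
  then have "finsum R f (A \<times> B) = finsum R f (\<Union>u\<in>A. {u} \<times> B)" by simp
  also have "\<dots> = finsum R (\<lambda>u. finsum R f ({u} \<times> B)) A"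
    by (rule add.finprod_UN_disjoint) (use assms in \<open>auto simp: pairwise_def disjnt_def\<close>)
  also have "\<dots> = finsum R (\<lambda>u. finsum R (\<lambda>v. f (u, v)) B) A"
  proof (rule add.finprod_cong')
    fix u assume u: "u \<in> A"
    have "{u} \<times> B = Pair u ` B" by auto
    then show "finsum R f ({u} \<times> B) = finsum R (\<lambda>v. f (u, v)) B"
      using assms u by (simp only:) (rule finsum_reindex, auto simp: inj_on_def Pi_def)
  qed (use assms in \<open>auto simp: Pi_def\<close>)
  finally show ?thesis .
qed

end

locale LPA_loc = ring R for R :: "('r, 'm) ring_scheme" (structure) +
  fixes E0 :: "'v set" and E1 :: "'e set" and s r :: "'e \<Rightarrow> 'v"
  assumes one_nz: "\<one> \<noteq> \<zero>" and gr: "graph E0 E1 s r"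
begin

abbreviation F where "F \<equiv> free_alg R E0 E1"

definition fs :: "('a \<Rightarrow> 'r) \<Rightarrow> bool" where
  "fs x \<longleftrightarrow> (\<forall>w. x w \<in> carrier R) \<and> finite (supp R x)"

definition conv :: "(('v,'e) gen list \<Rightarrow> 'r) \<Rightarrow> (('v,'e) gen list \<Rightarrow> 'r) \<Rightarrow> (('v,'e) gen list \<Rightarrow> 'r)" where
  "conv x y = (\<lambda>w. finsum R (\<lambda>(u, v). x u \<otimes> y v) (Sp w))"

definition LL :: "('a \<Rightarrow> 'r) \<Rightarrow> ('a \<Rightarrow> 'r) \<Rightarrow> 'r" where
  "LL G x = finsum R (\<lambda>w. x w \<otimes> G w) (supp R x)"

lemma F_simps:
  "carrier F = {x. (\<forall>w. x w \<in> carrier R) \<and> finite {w. x w \<noteq> \<zero>}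
                   \<and> (\<forall>w. x w \<noteq> \<zero> \<longrightarrow> set w \<subseteq> gens E0 E1)}"
  "mult F = conv" "one F = (\<lambda>w. if w = [] then \<one> else \<zero>)" "zero F = (\<lambda>w. \<zero>)"
  "add F = (\<lambda>x y w. x w \<oplus> y w)"
  by (auto simp: free_alg_def conv_def Sp_def fun_eq_iff)

lemma LL_closed: "fs x \<Longrightarrow> (\<And>w. G w \<in> carrier R) \<Longrightarrow> LL G x \<in> carrier R"
  unfolding LL_def fs_def by (auto intro!: finsum_closed)

lemma LL_sup:
  assumes "finite W" "supp R x \<subseteq> W" "\<And>w. x w \<in> carrier R" "\<And>w. G w \<in> carrier R"
  shows "LL G x = finsum R (\<lambda>w. x w \<otimes> G w) W"
  unfolding LL_def
  by (rule add.finprod_mono_neutral_cong_left) (use assms in \<open>auto simp: supp_def\<close>)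

lemma conv_closed: "(\<And>w. x w \<in> carrier R) \<Longrightarrow> (\<And>w. y w \<in> carrier R) \<Longrightarrow> conv x y w \<in> carrier R"
  unfolding conv_def by (auto intro!: finsum_closed)

lemma supp_conv:
  assumes "\<And>w. x w \<in> carrier R" "\<And>w. y w \<in> carrier R"
  shows "supp R (conv x y) \<subseteq> (\<lambda>(u, v). u @ v) ` (supp R x \<times> supp R y)"
proof
  fix w assume w: "w \<in> supp R (conv x y)"
  show "w \<in> (\<lambda>(u, v). u @ v) ` (supp R x \<times> supp R y)"
  proof (rule ccontr)
    assume nw: "w \<notin> (\<lambda>(u, v). u @ v) ` (supp R x \<times> supp R y)"
    have "conv x y w = \<zero>" unfolding conv_def
    proof (rule add.finprod_one_eqI)
      fix p assume "p \<in> Sp w"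
      then obtain u v where p: "p = (u, v)" "u @ v = w" by (auto simp: Sp_def)
      then have "x u = \<zero> \<or> y v = \<zero>" using nw by (force simp: supp_def)
      then show "(\<lambda>(u, v). x u \<otimes> y v) p = \<zero>" using p assms by auto
    qed
    then show False using w by (simp add: supp_def)
  qed
qed

lemma fs_conv: "fs x \<Longrightarrow> fs y \<Longrightarrow> fs (conv x y)"
  unfolding fs_def using supp_conv conv_closed
  by (metis (no_types, lifting) finite_SigmaI finite_imageI finite_subset)

lemma star:
  assumes a: "fs a" and b: "fs b" and G: "\<And>w. G w \<in> carrier R"
  shows "LL G (conv a b) = LL (\<lambda>u. LL (\<lambda>v. G (u @ v)) b) a"
proof -
  define A where "A = supp R a"
  define B where "B = supp R b"
  define W where "W = (\<lambda>(u, v). u @ v) ` (A \<times> B)"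
  define f where "f = (\<lambda>(u, v). a u \<otimes> b v \<otimes> G (u @ v))"
  have ac: "\<And>w. a w \<in> carrier R" and bc: "\<And>w. b w \<in> carrier R" using a b by (auto simp: fs_def)
  have fA: "finite A" "finite B" using a b by (auto simp: fs_def A_def B_def)
  have fW: "finite W" using fA by (simp add: W_def)
  have fc: "f p \<in> carrier R" for p using ac bc G by (auto simp: f_def split: prod.splits)
  have "LL G (conv a b) = finsum R (\<lambda>w. conv a b w \<otimes> G w) W"
    by (rule LL_sup) (use fW supp_conv[OF ac bc] G conv_closed[OF ac bc] in \<open>auto simp: W_def A_def B_def\<close>)
  also have "\<dots> = finsum R (\<lambda>w. finsum R f (Sp w \<inter> (A \<times> B))) W"
  proof (rule add.finprod_cong')
    fix w assume "w \<in> W"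
    have "conv a b w = finsum R (\<lambda>(u, v). a u \<otimes> b v) (Sp w \<inter> (A \<times> B))"
      unfolding conv_def
      by (rule add.finprod_mono_neutral_cong_right)
         (use ac bc in \<open>auto simp: A_def B_def supp_def\<close>)
    also have "\<dots> \<otimes> G w = finsum R (\<lambda>p. (\<lambda>(u, v). a u \<otimes> b v) p \<otimes> G w) (Sp w \<inter> (A \<times> B))"
      by (rule finsum_ldistr) (use ac bc G in auto)
    also have "\<dots> = finsum R f (Sp w \<inter> (A \<times> B))"
      by (rule add.finprod_cong') (use fc in \<open>auto simp: f_def Sp_def\<close>)
    finally show "conv a b w \<otimes> G w = finsum R f (Sp w \<inter> (A \<times> B))" .
  qed (use fc in auto)
  also have "\<dots> = finsum R f (\<Union>w\<in>W. Sp w \<inter> (A \<times> B))"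
    by (rule add.finprod_UN_disjoint[symmetric])
       (use fW fc finite_Sp in \<open>auto simp: pairwise_def disjnt_def Sp_def\<close>)
  also have "(\<Union>w\<in>W. Sp w \<inter> (A \<times> B)) = A \<times> B"
    by (auto simp: W_def Sp_def)
  also have "finsum R f (A \<times> B) = finsum R (\<lambda>u. finsum R (\<lambda>v. f (u, v)) B) A"
    by (rule finsum_prod) (use fA fc in auto)
  also have "\<dots> = finsum R (\<lambda>u. a u \<otimes> LL (\<lambda>v. G (u @ v)) b) A"
  proof (rule add.finprod_cong')
    fix u assume "u \<in> A"
    have "a u \<otimes> LL (\<lambda>v. G (u @ v)) b = finsum R (\<lambda>v. a u \<otimes> (b v \<otimes> G (u @ v))) B"
      unfolding LL_def B_def by (rule finsum_rdistr) (use ac bc G fA in \<open>auto simp: B_def\<close>)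
    then show "finsum R (\<lambda>v. f (u, v)) B = a u \<otimes> LL (\<lambda>v. G (u @ v)) b"
      using ac bc G by (simp add: f_def m_assoc)
  qed (use ac b G in \<open>auto intro!: LL_closed\<close>)
  also have "\<dots> = LL (\<lambda>u. LL (\<lambda>v. G (u @ v)) b) a" by (simp add: LL_def A_def)
  finally show ?thesis .
qed

end

context LPA_loc
begin

lemma carrierF_iff: "x \<in> carrier F \<longleftrightarrow> fs x \<and> (\<forall>w. x w \<noteq> \<zero> \<longrightarrow> set w \<subseteq> gens E0 E1)"
  by (auto simp: F_simps fs_def supp_def)

lemma carrierF_fs: "x \<in> carrier F \<Longrightarrow> fs x"
  by (simp add: carrierF_iff)

lemma fs_carr: "fs x \<Longrightarrow> x w \<in> carrier R"
  by (simp add: fs_def)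

lemma LL_zero_fun: "fs x \<Longrightarrow> LL (\<lambda>w. \<zero>) x = \<zero>"
  unfolding LL_def by (rule add.finprod_one_eqI) (auto simp: fs_def)

lemma LL_cong: "fs x \<Longrightarrow> (\<And>w. G' w \<in> carrier R) \<Longrightarrow> (\<And>w. w \<in> supp R x \<Longrightarrow> G w = G' w) \<Longrightarrow> LL G x = LL G' x"
  unfolding LL_def by (rule add.finprod_cong) (auto simp: Pi_def fs_def)

lemma conv_LL:
  assumes x: "fs x" and y: "\<And>w. y w \<in> carrier R"
  shows "conv x y t = LL (\<lambda>p. if (\<exists>q. p @ q = t) then y (drop (length p) t) else \<zero>) x"
    (is "_ = LL ?G x")
proof -
  have xc: "\<And>w. x w \<in> carrier R" using x by (simp add: fs_def)
  define P where "P = fst ` Sp t"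
  have fP: "finite P" by (simp add: P_def)
  have SpP: "Sp t = (\<lambda>p. (p, drop (length p) t)) ` P"
    by (force simp: P_def Sp_def image_def)
  have "conv x y t = finsum R (\<lambda>(u, v). x u \<otimes> y v) ((\<lambda>p. (p, drop (length p) t)) ` P)"
    by (simp add: conv_def SpP)
  also have "\<dots> = finsum R (\<lambda>p. x p \<otimes> y (drop (length p) t)) P"
    by (subst finsum_reindex) (use xc y in \<open>auto simp: inj_on_def\<close>)
  also have "\<dots> = finsum R (\<lambda>p. x p \<otimes> ?G p) P"
    by (rule add.finprod_cong') (use xc y in \<open>auto simp: P_def Sp_def\<close>)
  also have "\<dots> = finsum R (\<lambda>p. x p \<otimes> ?G p) (supp R x)"
    by (rule add.finprod_mono_neutral_cong)
       (use x xc y fP in \<open>auto simp: fs_def supp_def P_def Sp_def image_def\<close>)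
  finally show ?thesis by (simp add: LL_def)
qed

lemma conv_assoc:
  assumes a: "fs a" and b: "fs b" and c: "fs c"
  shows "conv (conv a b) c = conv a (conv b c)"
proof
  fix t
  have cc: "\<And>w. c w \<in> carrier R" using c by (simp add: fs_def)
  define G where "G = (\<lambda>p. if (\<exists>q. p @ q = t) then c (drop (length p) t) else \<zero>)"
  have Gc: "G w \<in> carrier R" for w using cc by (simp add: G_def)
  have "conv (conv a b) c t = LL G (conv a b)"
    unfolding G_def by (rule conv_LL[OF fs_conv[OF a b] cc])
  also have "\<dots> = LL (\<lambda>u. LL (\<lambda>v. G (u @ v)) b) a" by (rule star[OF a b Gc])
  also have "\<dots> = LL (\<lambda>p. if (\<exists>q. p @ q = t) then conv b c (drop (length p) t) else \<zero>) a"
  proof (rule LL_cong[OF a])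
    fix u
    show "(if (\<exists>q. u @ q = t) then conv b c (drop (length u) t) else \<zero>) \<in> carrier R"
      using conv_closed b cc by (auto simp: fs_def)
    show "LL (\<lambda>v. G (u @ v)) b = (if (\<exists>q. u @ q = t) then conv b c (drop (length u) t) else \<zero>)"
    proof (cases "\<exists>q. u @ q = t")
      case True
      then obtain t' where t: "t = u @ t'" by auto
      have "conv b c (drop (length u) t) = LL (\<lambda>p. if (\<exists>q. p @ q = t') then c (drop (length p) t') else \<zero>) b"
        using conv_LL[OF b cc] t by simp
      also have "\<dots> = LL (\<lambda>v. G (u @ v)) b"
        by (rule LL_cong[OF b]) (auto simp: G_def t cc)
      finally show ?thesis using True by simp
    next
      case False
      then have "G (u @ v) = \<zero>" for v by (auto simp: G_def)
      then show ?thesis using False LL_zero_fun[OF b] by simp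
    qed
  qed
  also have "\<dots> = conv a (conv b c) t"
    by (rule conv_LL[OF a, symmetric]) (use conv_closed b cc in \<open>auto simp: fs_def\<close>)
  finally show "conv (conv a b) c t = conv a (conv b c) t" .
qed

lemma supp_one: "supp R (\<lambda>w::('v,'e) gen list. if w = [] then \<one> else \<zero>) = {[]}"
  using one_nz by (auto simp: supp_def)

lemma fs_one: "fs (\<lambda>w::('v,'e) gen list. if w = [] then \<one> else \<zero>)"
  by (simp add: fs_def supp_one)

lemma conv_one_left:
  assumes x: "fs x"
  shows "conv (\<lambda>w. if w = [] then \<one> else \<zero>) x = x"
proof
  fix t
  have xc: "\<And>w. x w \<in> carrier R" using x by (simp add: fs_def)
  show "conv (\<lambda>w. if w = [] then \<one> else \<zero>) x t = x t"
    by (subst conv_LL[OF fs_one xc]) (simp add: LL_def supp_one xc)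
qed

lemma conv_one_right:
  assumes x: "fs x"
  shows "conv x (\<lambda>w. if w = [] then \<one> else \<zero>) = x"
proof
  fix t
  have xc: "\<And>w. x w \<in> carrier R" using x by (simp add: fs_def)
  have fx: "finite (supp R x)" using x by (simp add: fs_def)
  have "conv x (\<lambda>w. if w = [] then \<one> else \<zero>) t
      = LL (\<lambda>p. if p = t then \<one> else \<zero>) x"
    by (subst conv_LL[OF x]) (auto intro!: LL_cong[OF x])
  also have "\<dots> = finsum R (\<lambda>p. x p \<otimes> (if p = t then \<one> else \<zero>)) (insert t (supp R x))"
    by (rule LL_sup) (use fx xc in auto)
  also have "\<dots> = finsum R (\<lambda>p. if p = t then x p else \<zero>) (insert t (supp R x))"
    by (rule add.finprod_cong') (use xc in auto)
  also have "\<dots> = x t"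
    by (rule add.finprod_singleton_swap) (use fx xc in auto)
  finally show "conv x (\<lambda>w. if w = [] then \<one> else \<zero>) t = x t" .
qed

lemma conv_ldistr:
  assumes "\<And>w. x w \<in> carrier R" "\<And>w. y w \<in> carrier R" "\<And>w. z w \<in> carrier R"
  shows "conv (\<lambda>w. x w \<oplus> y w) z = (\<lambda>w. conv x z w \<oplus> conv y z w)"
proof
  fix t
  show "conv (\<lambda>w. x w \<oplus> y w) z t = conv x z t \<oplus> conv y z t"
    unfolding conv_def
    by (subst finsum_addf[symmetric]) (auto intro!: add.finprod_cong' simp: assms l_distr)
qed

lemma conv_rdistr:
  assumes "\<And>w. x w \<in> carrier R" "\<And>w. y w \<in> carrier R" "\<And>w. z w \<in> carrier R"
  shows "conv z (\<lambda>w. x w \<oplus> y w) = (\<lambda>w. conv z x w \<oplus> conv z y w)"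
proof
  fix t
  show "conv z (\<lambda>w. x w \<oplus> y w) t = conv z x t \<oplus> conv z y t"
    unfolding conv_def
    by (subst finsum_addf[symmetric]) (auto intro!: add.finprod_cong' simp: assms r_distr)
qed

lemma conv_carrier:
  assumes "x \<in> carrier F" "y \<in> carrier F"
  shows "conv x y \<in> carrier F"
proof -
  have fx: "fs x" "fs y" using assms carrierF_fs by auto
  have "set w \<subseteq> gens E0 E1" if "conv x y w \<noteq> \<zero>" for w
  proof -
    have "w \<in> supp R (conv x y)" using that by (simp add: supp_def)
    then obtain u v where "w = u @ v" "x u \<noteq> \<zero>" "y v \<noteq> \<zero>"
      using supp_conv[of x y] fx by (auto simp: fs_def supp_def)
    then show ?thesis using assms by (auto simp: carrierF_iff)
  qed
  then show ?thesis using fs_conv[OF fx] by (simp add: carrierF_iff)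
qed

lemma add_carrier:
  assumes "x \<in> carrier F" "y \<in> carrier F"
  shows "(\<lambda>w. x w \<oplus> y w) \<in> carrier F"
proof -
  have *: "x w \<oplus> y w \<noteq> \<zero> \<Longrightarrow> x w \<noteq> \<zero> \<or> y w \<noteq> \<zero>" for w
    using assms by (auto simp: F_simps)
  have "{w. x w \<oplus> y w \<noteq> \<zero>} \<subseteq> {w. x w \<noteq> \<zero>} \<union> {w. y w \<noteq> \<zero>}"
    using * by auto
  moreover have "x w \<oplus> y w \<noteq> \<zero> \<Longrightarrow> set w \<subseteq> gens E0 E1" for w
    using *[of w] assms unfolding F_simps by blast
  ultimately show ?thesis using assms by (auto simp: F_simps intro: finite_subset)
qed

lemma ring_F: "ring F"
proof (rule ringI)
  show "abelian_group F"
  proof (rule abelian_groupI)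
    fix x assume x: "x \<in> carrier F"
    show "\<exists>y\<in>carrier F. y \<oplus>\<^bsub>F\<^esub> x = \<zero>\<^bsub>F\<^esub>"
    proof (intro bexI)
      show "(\<lambda>w. \<ominus> x w) \<oplus>\<^bsub>F\<^esub> x = \<zero>\<^bsub>F\<^esub>" using x by (auto simp: F_simps l_neg)
      show "(\<lambda>w. \<ominus> x w) \<in> carrier F" using x by (auto simp: F_simps)
    qed
  next
    fix x y assume "x \<in> carrier F" "y \<in> carrier F"
    then show "x \<oplus>\<^bsub>F\<^esub> y \<in> carrier F" using add_carrier by (simp add: F_simps(5))
  next
    fix x y z assume "x \<in> carrier F" "y \<in> carrier F" "z \<in> carrier F"
    then show "x \<oplus>\<^bsub>F\<^esub> y \<oplus>\<^bsub>F\<^esub> z = x \<oplus>\<^bsub>F\<^esub> (y \<oplus>\<^bsub>F\<^esub> z)"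
      by (auto simp: F_simps a_assoc)
  qed (auto simp: F_simps a_comm)
  show "monoid F"
  proof (rule monoidI)
    fix x y z assume "x \<in> carrier F" "y \<in> carrier F" "z \<in> carrier F"
    then show "x \<otimes>\<^bsub>F\<^esub> y \<otimes>\<^bsub>F\<^esub> z = x \<otimes>\<^bsub>F\<^esub> (y \<otimes>\<^bsub>F\<^esub> z)"
      by (simp add: F_simps(2) conv_assoc carrierF_fs)
  qed (auto simp: F_simps(2-4) conv_carrier conv_one_left conv_one_right carrierF_fs,
       auto simp: F_simps one_nz)
qed (auto simp: F_simps(2,5) conv_ldistr conv_rdistr carrierF_fs fs_carr)

end

context LPA_loc
begin

abbreviation I where "I \<equiv> leavitt_ideal R E0 E1 s r"
abbreviation L where "L \<equiv> LPA R E0 E1 s r"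
abbreviation cl where "cl \<equiv> cls R E0 E1 s r"

lemma sE0: "f \<in> E1 \<Longrightarrow> s f \<in> E0" and rE0: "f \<in> E1 \<Longrightarrow> r f \<in> E0"
  using gr by (auto simp: graph_def)

lemma gens_simps[simp]:
  "V v \<in> gens E0 E1 \<longleftrightarrow> v \<in> E0" "Ed f \<in> gens E0 E1 \<longleftrightarrow> f \<in> E1" "Gh f \<in> gens E0 E1 \<longleftrightarrow> f \<in> E1"
  by (auto simp: gens_def)

lemma wmono_carrier: "set w \<subseteq> gens E0 E1 \<Longrightarrow> c \<in> carrier R \<Longrightarrow> wmono R w c \<in> carrier F"
proof -
  assume a: "set w \<subseteq> gens E0 E1" "c \<in> carrier R"
  have "{u. wmono R w c u \<noteq> \<zero>} \<subseteq> {w}" by (auto simp: wmono_def)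
  then show ?thesis using a by (auto simp: F_simps wmono_def intro: finite_subset)
qed

lemma wmono_mult:
  assumes "c \<in> carrier R" "d \<in> carrier R"
  shows "conv (wmono R u c) (wmono R v d) = wmono R (u @ v) (c \<otimes> d)"
proof
  fix t
  show "conv (wmono R u c) (wmono R v d) t = wmono R (u @ v) (c \<otimes> d) t"
  proof (cases "t = u @ v")
    case True
    have "conv (wmono R u c) (wmono R v d) t
        = finsum R (\<lambda>p. if p = (u, v) then c \<otimes> d else \<zero>) (Sp t)"
      unfolding conv_def
    proof (rule add.finprod_cong')
      fix p assume "p \<in> Sp t"
      then show "(\<lambda>(a, b). wmono R u c a \<otimes> wmono R v d b) p = (if p = (u, v) then c \<otimes> d else \<zero>)"
        using assms by (cases p) (auto simp: wmono_def)
    qed (use assms in auto)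
    also have "\<dots> = c \<otimes> d"
      by (rule add.finprod_singleton_swap[where f="\<lambda>_. c \<otimes> d", simplified])
         (use True assms finite_Sp in \<open>auto simp: Sp_def\<close>)
    finally show ?thesis using True by (simp add: wmono_def)
  next
    case False
    have "conv (wmono R u c) (wmono R v d) t = \<zero>"
      unfolding conv_def by (rule add.finprod_one_eqI) (use False assms in \<open>auto simp: wmono_def Sp_def\<close>)
    then show ?thesis using False by (simp add: wmono_def)
  qed
qed

lemma wmono_multF:
  "c \<in> carrier R \<Longrightarrow> d \<in> carrier R \<Longrightarrow> wmono R u c \<otimes>\<^bsub>F\<^esub> wmono R v d = wmono R (u @ v) (c \<otimes> d)"
  by (simp add: F_simps wmono_mult)

lemma minusF: "x \<in> carrier F \<Longrightarrow> \<ominus>\<^bsub>F\<^esub> x = (\<lambda>w. \<ominus> x w)"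
proof -
  assume x: "x \<in> carrier F"
  interpret FR: ring F by (rule ring_F)
  have c: "(\<lambda>w. \<ominus> x w) \<in> carrier F" using x by (auto simp: F_simps)
  show ?thesis
    by (rule FR.minus_equality) (use x c in \<open>auto simp: F_simps l_neg\<close>)
qed

lemma a_minusF: "x \<in> carrier F \<Longrightarrow> y \<in> carrier F \<Longrightarrow> x \<ominus>\<^bsub>F\<^esub> y = (\<lambda>w. x w \<ominus> y w)"
  by (simp add: a_minus_def minusF F_simps)

lemma rel2_eq:
  assumes "w1 \<noteq> w2" "set w1 \<subseteq> gens E0 E1" "set w2 \<subseteq> gens E0 E1"
  shows "rel2 R w1 w2 = wmono R w1 \<one> \<ominus>\<^bsub>F\<^esub> wmono R w2 \<one>"
  using assms wmono_carrier[of w1 \<one>] wmono_carrier[of w2 \<one>]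
  by (subst a_minusF) (auto simp: rel2_def wmono_def fun_eq_iff a_minus_def)

lemma rels_carrier: "leavitt_rels R E0 E1 s r \<subseteq> carrier F"
proof -
  interpret FR: ring F by (rule ring_F)
  have ck: "ck_rel R E1 s v \<in> carrier F" if v: "v \<in> E0" "finite {f \<in> E1. s f = v}" for v
  proof -
    have "{u. ck_rel R E1 s v u \<noteq> \<zero>} \<subseteq> insert [V v] ((\<lambda>f. [Ed f, Gh f]) ` {f \<in> E1. s f = v})"
      by (auto simp: ck_rel_def)
    moreover have "ck_rel R E1 s v u \<in> carrier R" for u by (auto simp: ck_rel_def)
    moreover have "ck_rel R E1 s v u \<noteq> \<zero> \<Longrightarrow> set u \<subseteq> gens E0 E1" for u
      using v by (auto simp: ck_rel_def split: if_splits)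
    ultimately show ?thesis using v by (auto simp: F_simps intro: finite_subset)
  qed
  have "\<And>w1 w2. w1 \<noteq> w2 \<Longrightarrow> set w1 \<subseteq> gens E0 E1 \<Longrightarrow> set w2 \<subseteq> gens E0 E1 \<Longrightarrow> rel2 R w1 w2 \<in> carrier F"
    by (simp add: rel2_eq wmono_carrier)
  then show ?thesis unfolding leavitt_rels_def
    using ck sE0 rE0 by (auto intro!: wmono_carrier)
qed

lemma I_ideal: "ideal I F"
proof -
  interpret FR: ring F by (rule ring_F)
  show ?thesis unfolding leavitt_ideal_def by (rule FR.genideal_ideal[OF rels_carrier])
qed

lemma rels_I: "leavitt_rels R E0 E1 s r \<subseteq> I"
proof -
  interpret FR: ring F by (rule ring_F)
  show ?thesis unfolding leavitt_ideal_def by (rule FR.genideal_self[OF rels_carrier])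
qed

lemma ring_L: "ring L"
  unfolding LPA_def by (rule ideal.quotient_is_ring[OF I_ideal])

lemma cl_carrier: "x \<in> carrier F \<Longrightarrow> cl x \<in> carrier L"
proof -
  assume x: "x \<in> carrier F"
  interpret FR: ring F by (rule ring_F)
  interpret FI: ideal I F by (rule I_ideal)
  show ?thesis unfolding cls_def LPA_def FactRing_def
    using FR.a_rcosetsI[OF FI.a_subset x] by simp
qed

lemma cl_mult: "x \<in> carrier F \<Longrightarrow> y \<in> carrier F \<Longrightarrow> cl x \<otimes>\<^bsub>L\<^esub> cl y = cl (x \<otimes>\<^bsub>F\<^esub> y)"
  unfolding cls_def LPA_def FactRing_def by (simp add: ideal.rcoset_mult_add[OF I_ideal])

lemma cl_add: "x \<in> carrier F \<Longrightarrow> y \<in> carrier F \<Longrightarrow> cl x \<oplus>\<^bsub>L\<^esub> cl y = cl (x \<oplus>\<^bsub>F\<^esub> y)"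
  unfolding cls_def LPA_def FactRing_def by (simp add: ideal.a_rcos_sum[OF I_ideal])

lemma zero_L: "\<zero>\<^bsub>L\<^esub> = I"
  by (simp add: LPA_def FactRing_def)

lemma cl_zero_iff: "x \<in> carrier F \<Longrightarrow> cl x = \<zero>\<^bsub>L\<^esub> \<longleftrightarrow> x \<in> I"
proof -
  assume x: "x \<in> carrier F"
  interpret FR: ring F by (rule ring_F)
  interpret FI: ideal I F by (rule I_ideal)
  show ?thesis
  proof
    assume "cl x = \<zero>\<^bsub>L\<^esub>"
    then have "I +>\<^bsub>F\<^esub> x = I" by (simp add: cls_def zero_L)
    then show "x \<in> I" using FI.a_rcos_self[OF x] by simp
  qed (simp add: cls_def zero_L FI.a_rcos_const)
qed

lemma cl_eqI: "x \<in> carrier F \<Longrightarrow> y \<in> carrier F \<Longrightarrow> y \<ominus>\<^bsub>F\<^esub> x \<in> I \<Longrightarrow> cl x = cl y"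
proof -
  assume xy: "x \<in> carrier F" "y \<in> carrier F" "y \<ominus>\<^bsub>F\<^esub> x \<in> I"
  interpret FR: ring F by (rule ring_F)
  interpret FI: ideal I F by (rule I_ideal)
  have "y \<in> I +>\<^bsub>F\<^esub> x" using FI.a_rcos_module_minus[OF ring_F xy(1,2)] xy by simp
  then show ?thesis unfolding cls_def using FI.a_repr_independence' xy by blast
qed

definition gw :: "('v,'e) gen list \<Rightarrow> bool" where "gw w \<longleftrightarrow> set w \<subseteq> gens E0 E1"

definition weq where "weq x y \<longleftrightarrow> gw x \<and> gw y \<and> cl (wmono R x \<one>) = cl (wmono R y \<one>)"
definition wz where "wz x \<longleftrightarrow> gw x \<and> cl (wmono R x \<one>) = \<zero>\<^bsub>L\<^esub>"

lemma gw_simps[simp]: "gw [] " "gw (a # w) \<longleftrightarrow> a \<in> gens E0 E1 \<and> gw w" "gw (u @ v) \<longleftrightarrow> gw u \<and> gw v"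
  "gw (map Ed q) \<longleftrightarrow> set q \<subseteq> E1" "gw (map Gh q) \<longleftrightarrow> set q \<subseteq> E1"
  by (auto simp: gw_def gens_def)

lemma cl_split:
  assumes "gw u" "gw w" "c \<in> carrier R"
  shows "cl (wmono R (u @ w) c) = cl (wmono R u c) \<otimes>\<^bsub>L\<^esub> cl (wmono R w \<one>)"
  using assms by (simp add: cl_mult wmono_carrier gw_def wmono_multF)

lemma cl_split3:
  assumes "gw u" "gw w" "gw v" "c \<in> carrier R"
  shows "cl (wmono R (u @ w @ v) c) = cl (wmono R u c) \<otimes>\<^bsub>L\<^esub> cl (wmono R w \<one>) \<otimes>\<^bsub>L\<^esub> cl (wmono R v \<one>)"
  using assms cl_split[of "u @ w" v c] cl_split[of u w c] by simp

lemma weq_c: "weq x y \<Longrightarrow> c \<in> carrier R \<Longrightarrow> cl (wmono R x c) = cl (wmono R y c)"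
  using cl_split[of "[]" x c] cl_split[of "[]" y c] by (simp add: weq_def)

lemma wz_c: "wz x \<Longrightarrow> c \<in> carrier R \<Longrightarrow> cl (wmono R x c) = \<zero>\<^bsub>L\<^esub>"
proof -
  assume a: "wz x" "c \<in> carrier R"
  interpret LR: ring L by (rule ring_L)
  show ?thesis using cl_split[of "[]" x c] a
    by (simp add: wz_def cl_carrier wmono_carrier)
qed

lemma weq_refl: "gw x \<Longrightarrow> weq x x" by (simp add: weq_def)
lemma weq_sym: "weq x y \<Longrightarrow> weq y x" by (simp add: weq_def)
lemma weq_trans: "weq x y \<Longrightarrow> weq y z \<Longrightarrow> weq x z" by (simp add: weq_def)
lemma weq_wz: "weq x y \<Longrightarrow> wz y \<Longrightarrow> wz x" by (simp add: weq_def wz_def)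

lemma weq_ctx: "weq x y \<Longrightarrow> gw u \<Longrightarrow> gw v \<Longrightarrow> weq (u @ x @ v) (u @ y @ v)"
  unfolding weq_def using cl_split3[of u x v \<one>] cl_split3[of u y v \<one>] by simp

lemma wz_ctx: "wz x \<Longrightarrow> gw u \<Longrightarrow> gw v \<Longrightarrow> wz (u @ x @ v)"
proof -
  assume a: "wz x" "gw u" "gw v"
  interpret LR: ring L by (rule ring_L)
  show ?thesis using a cl_split3[of u x v \<one>]
    by (simp add: wz_def cl_carrier wmono_carrier gw_def)
qed

lemma rel2_weq:
  assumes "rel2 R w1 w2 \<in> leavitt_rels R E0 E1 s r" "w1 \<noteq> w2" "gw w1" "gw w2"
  shows "weq w1 w2"
proof -
  have "wmono R w1 \<one> \<ominus>\<^bsub>F\<^esub> wmono R w2 \<one> \<in> I"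
    using assms rels_I rel2_eq[of w1 w2] by (auto simp: gw_def)
  then show ?thesis using assms cl_eqI[of "wmono R w2 \<one>" "wmono R w1 \<one>"]
    by (auto simp: weq_def gw_def wmono_carrier)
qed

lemma mono_wz:
  assumes "wmono R w \<one> \<in> leavitt_rels R E0 E1 s r" "gw w"
  shows "wz w"
  using assms rels_I cl_zero_iff[of "wmono R w \<one>"] wmono_carrier[of w \<one>]
  by (auto simp: wz_def gw_def)

lemma R1: "v \<in> E0 \<Longrightarrow> u \<in> E0 \<Longrightarrow> v \<noteq> u \<Longrightarrow> wz [V v, V u]"
  by (rule mono_wz) (auto simp: leavitt_rels_def)
lemma R2: "v \<in> E0 \<Longrightarrow> weq [V v, V v] [V v]"
  by (rule rel2_weq) (auto simp: leavitt_rels_def)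
lemma R3: "f \<in> E1 \<Longrightarrow> weq [V (s f), Ed f] [Ed f]"
  by (rule rel2_weq) (auto simp: leavitt_rels_def sE0)
lemma R4: "f \<in> E1 \<Longrightarrow> weq [Ed f, V (r f)] [Ed f]"
  by (rule rel2_weq) (auto simp: leavitt_rels_def rE0)
lemma R5: "f \<in> E1 \<Longrightarrow> weq [V (r f), Gh f] [Gh f]"
  by (rule rel2_weq) (auto simp: leavitt_rels_def rE0)
lemma R6: "f \<in> E1 \<Longrightarrow> weq [Gh f, V (s f)] [Gh f]"
  by (rule rel2_weq) (auto simp: leavitt_rels_def sE0)
lemma R7: "f \<in> E1 \<Longrightarrow> weq [Gh f, Ed f] [V (r f)]"
  by (rule rel2_weq) (auto simp: leavitt_rels_def rE0)
lemma R8: "f \<in> E1 \<Longrightarrow> g \<in> E1 \<Longrightarrow> f \<noteq> g \<Longrightarrow> wz [Gh f, Ed g]"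
  by (rule mono_wz) (auto simp: leavitt_rels_def)

end

context LPA_loc
begin

definition chn :: "'e list \<Rightarrow> bool" where
  "chn es \<longleftrightarrow> set es \<subseteq> E1 \<and> (\<forall>i. Suc i < length es \<longrightarrow> s (es ! Suc i) = r (es ! i))"

declare weq_trans[trans]

lemma chn_Nil[simp]: "chn []" by (simp add: chn_def)

lemma chn_Cons: "chn (e # es) \<longleftrightarrow> e \<in> E1 \<and> chn es \<and> (es \<noteq> [] \<longrightarrow> s (hd es) = r e)"
proof -
  have "(\<forall>i. Suc i < length (e # es) \<longrightarrow> s ((e # es) ! Suc i) = r ((e # es) ! i)) \<longleftrightarrow>
        (es \<noteq> [] \<longrightarrow> s (hd es) = r e) \<and> (\<forall>i. Suc i < length es \<longrightarrow> s (es ! Suc i) = r (es ! i))"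
    (is "?A \<longleftrightarrow> ?B")
  proof
    assume a: ?A
    have "es \<noteq> [] \<longrightarrow> s (hd es) = r e" using a[rule_format, of 0] by (cases es) auto
    moreover have "\<forall>i. Suc i < length es \<longrightarrow> s (es ! Suc i) = r (es ! i)"
      using a by (metis Suc_less_eq length_Cons nth_Cons_Suc)
    ultimately show ?B by blast
  next
    assume b: ?B
    show ?A
    proof (intro allI impI)
      fix i assume "Suc i < length (e # es)"
      then show "s ((e # es) ! Suc i) = r ((e # es) ! i)"
        using b by (cases i) (auto simp: hd_conv_nth)
    qed
  qed
  then show ?thesis unfolding chn_def by auto
qed

lemma chn_append: "chn (xs @ ys) \<longleftrightarrow> chn xs \<and> chn ys \<and> (xs \<noteq> [] \<and> ys \<noteq> [] \<longrightarrow> s (hd ys) = r (last xs))"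
  by (induction xs) (auto simp: chn_Cons)

lemma chn_E1: "chn q \<Longrightarrow> set q \<subseteq> E1" by (simp add: chn_def)

lemma edge_path_chn: "edge_path E1 s r es \<longleftrightarrow> es \<noteq> [] \<and> chn es"
  by (simp add: edge_path_def chn_def)

lemma weq_ctxI: "weq x y \<Longrightarrow> gw u \<Longrightarrow> gw v \<Longrightarrow> w1 = u @ x @ v \<Longrightarrow> w2 = u @ y @ v \<Longrightarrow> weq w1 w2"
  using weq_ctx by blast

lemma wz_ctxI: "wz x \<Longrightarrow> gw u \<Longrightarrow> gw v \<Longrightarrow> w1 = u @ x @ v \<Longrightarrow> wz w1"
  using wz_ctx by blast

lemma Z1: "v \<in> E0 \<Longrightarrow> g \<in> E1 \<Longrightarrow> v \<noteq> s g \<Longrightarrow> wz [V v, Ed g]"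
proof -
  assume a: "v \<in> E0" "g \<in> E1" "v \<noteq> s g"
  have "weq [V v, Ed g] [V v, V (s g), Ed g]"
    by (rule weq_ctxI[OF weq_sym[OF R3[OF a(2)]], of "[V v]" "[]"]) (use a sE0 in auto)
  moreover have "wz [V v, V (s g), Ed g]"
    by (rule wz_ctxI[OF R1[of v "s g"], of "[]" "[Ed g]"]) (use a sE0 in auto)
  ultimately show ?thesis by (rule weq_wz)
qed

lemma Z2: "u \<in> E0 \<Longrightarrow> g \<in> E1 \<Longrightarrow> u \<noteq> s g \<Longrightarrow> wz [Gh g, V u]"
proof -
  assume a: "u \<in> E0" "g \<in> E1" "u \<noteq> s g"
  have "weq [Gh g, V u] [Gh g, V (s g), V u]"
    by (rule weq_ctxI[OF weq_sym[OF R6[OF a(2)]], of "[]" "[V u]"]) (use a sE0 in auto)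
  moreover have "wz [Gh g, V (s g), V u]"
    by (rule wz_ctxI[OF R1[of "s g" u], of "[Gh g]" "[]"]) (use a sE0 in auto)
  ultimately show ?thesis by (rule weq_wz)
qed

lemma lemB: "q \<noteq> [] \<Longrightarrow> chn q \<Longrightarrow> weq (map Gh (rev q) @ map Ed q) [V (r (last q))]"
proof (induction q)
  case Nil then show ?case by simp
next
  case (Cons e q)
  show ?case
  proof (cases "q = []")
    case True
    then show ?thesis using R7[of e] Cons.prems by (simp add: chn_Cons)
  next
    case False
    then obtain h q' where q: "q = h # q'" by (cases q) auto
    have e: "e \<in> E1" "chn q" "s h = r e" using Cons.prems q by (auto simp: chn_Cons)
    have qE: "set q \<subseteq> E1" using e chn_E1 by auto
    have "weq (map Gh (rev (e # q)) @ map Ed (e # q)) (map Gh (rev q) @ [V (r e)] @ map Ed q)"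
      by (rule weq_ctxI[OF R7[OF e(1)], of "map Gh (rev q)" "map Ed q"]) (use e qE in auto)
    also have "weq (map Gh (rev q) @ [V (r e)] @ map Ed q) (map Gh (rev q) @ map Ed q)"
      by (rule weq_ctxI[OF R3[of h], of "map Gh (rev q)" "map Ed q'"]) (use e qE q in auto)
    also have "weq (map Gh (rev q) @ map Ed q) [V (r (last q))]"
      using Cons.IH False e by simp
    finally show ?thesis using False by simp
  qed
qed

end

lemma list_cases3:
  "(\<exists>g'. g = b @ g') \<or> (\<exists>b'. b = g @ b' \<and> b' \<noteq> []) \<or>
   (\<exists>p e h b1 g1. e \<noteq> h \<and> b = p @ e # b1 \<and> g = p @ h # g1)"
proof (induction b arbitrary: g)
  case Nil then show ?case by simp
next
  case (Cons x b)
  show ?case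
  proof (cases g)
    case Nil then show ?thesis by simp
  next
    case (Cons y g0)
    show ?thesis
    proof (cases "x = y")
      case False
      then show ?thesis using Cons by (metis append_Nil)
    next
      case True
      from Cons.IH[of g0] show ?thesis
        by (elim disjE exE conjE) (simp_all add: Cons True, (metis append_Cons)+)
    qed
  qed
qed

context LPA_loc
begin

definition pto :: "'v \<Rightarrow> 'e list \<Rightarrow> bool" where
  "pto v a \<longleftrightarrow> chn a \<and> (a \<noteq> [] \<longrightarrow> r (last a) = v)"

definition cw :: "'v \<Rightarrow> 'e list \<Rightarrow> 'e list \<Rightarrow> ('v,'e) gen list" where
  "cw v a b = map Ed a @ [V v] @ map Gh (rev b)"

lemma absorbL: "v \<in> E0 \<Longrightarrow> pto v b \<Longrightarrow> weq ([V v] @ map Gh (rev b) @ map Ed b) [V v]"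
proof (cases "b = []")
  case True
  assume "v \<in> E0" then show ?thesis using True by (simp add: weq_refl)
next
  case False
  assume a: "v \<in> E0" "pto v b"
  have bE: "set b \<subseteq> E1" using a chn_E1 by (auto simp: pto_def)
  have "weq ([V v] @ map Gh (rev b) @ map Ed b) ([V v] @ [V (r (last b))] @ [])"
    by (rule weq_ctxI[OF lemB[OF False]]) (use a bE in \<open>auto simp: pto_def\<close>)
  also have "weq ([V v] @ [V (r (last b))] @ []) [V v]"
    using R2[of v] a False by (simp add: pto_def)
  finally show ?thesis .
qed

lemma absorbR: "u \<in> E0 \<Longrightarrow> pto u g \<Longrightarrow> weq (map Gh (rev g) @ map Ed g @ [V u]) [V u]"
proof (cases "g = []")
  case True
  assume "u \<in> E0" then show ?thesis using True by (simp add: weq_refl)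
next
  case False
  assume a: "u \<in> E0" "pto u g"
  have gE: "set g \<subseteq> E1" using a chn_E1 by (auto simp: pto_def)
  have "weq ([] @ (map Gh (rev g) @ map Ed g) @ [V u]) ([] @ [V (r (last g))] @ [V u])"
    by (rule weq_ctx[OF lemB[OF False]]) (use a gE in \<open>auto simp: pto_def\<close>)
  also have "weq ([] @ [V (r (last g))] @ [V u]) [V u]"
    using R2[of u] a False by (simp add: pto_def)
  finally show ?thesis by simp
qed

lemma pto_E1: "pto v a \<Longrightarrow> set a \<subseteq> E1" by (simp add: pto_def chn_E1)


lemma caseI:
  assumes "v \<in> E0" "u \<in> E0" "pto v a" "pto v b" "pto u g" "pto u d" "g = b @ g'"
  shows "weq (cw v a b @ cw u g d) (map Ed a @ [V v] @ map Ed g' @ [V u] @ map Gh (rev d))"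
  by (rule weq_ctxI[OF absorbL[of v b], of "map Ed a" "map Ed g' @ [V u] @ map Gh (rev d)"])
     (use assms pto_E1[of v a] pto_E1[of u g] pto_E1[of u d] in \<open>auto simp: cw_def\<close>)

lemma caseII:
  assumes "v \<in> E0" "u \<in> E0" "pto v a" "pto v b" "pto u g" "pto u d" "b = g @ b'"
  shows "weq (cw v a b @ cw u g d) (map Ed a @ [V v] @ map Gh (rev b') @ [V u] @ map Gh (rev d))"
  by (rule weq_ctxI[OF absorbR[of u g], of "map Ed a @ [V v] @ map Gh (rev b')" "map Gh (rev d)"])
     (use assms pto_E1[of v a] pto_E1[of v b] pto_E1[of u d] in \<open>auto simp: cw_def\<close>)

lemma caseIII:
  assumes "v \<in> E0" "u \<in> E0" "pto v a" "pto v b" "pto u g" "pto u d"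
    and "b = p @ e # b1" "g = p @ h # g1" "e \<noteq> h"
  shows "wz (cw v a b @ cw u g d)"
proof -
  have E: "set a \<subseteq> E1" "set b \<subseteq> E1" "set g \<subseteq> E1" "set d \<subseteq> E1"
    using pto_E1[OF assms(3)] pto_E1[OF assms(4)] pto_E1[OF assms(5)] pto_E1[OF assms(6)] by auto
  have eh: "e \<in> E1" "h \<in> E1" using E assms(7,8) by auto
  define X where "X = map Ed a @ [V v] @ map Gh (rev b1)"
  define Y where "Y = map Ed g1 @ [V u] @ map Gh (rev d)"
  have gX: "gw X" "gw Y" using E assms by (auto simp: X_def Y_def)
  have W: "cw v a b @ cw u g d = X @ ([Gh e] @ map Gh (rev p) @ map Ed p @ [Ed h]) @ Y"
    using assms by (simp add: cw_def X_def Y_def)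
  have "wz ([Gh e] @ map Gh (rev p) @ map Ed p @ [Ed h])"
  proof (cases "p = []")
    case True then show ?thesis using R8[OF eh assms(9)] by simp
  next
    case False
    have cg: "chn g" using assms by (simp add: pto_def)
    then have sh: "s h = r (last p)" and cp: "chn p" using assms False by (auto simp: chn_append chn_Cons)
    have "weq ([Gh e] @ (map Gh (rev p) @ map Ed p) @ [Ed h]) ([Gh e] @ [V (r (last p))] @ [Ed h])"
      by (rule weq_ctx[OF lemB[OF False cp]]) (use eh cp chn_E1 in auto)
    also have "weq ([Gh e] @ [V (r (last p))] @ [Ed h]) ([Gh e] @ [Ed h] @ [])"
      by (rule weq_ctxI[OF R3[OF eh(2)], of "[Gh e]" "[]"]) (use eh sh in auto)
    finally show ?thesis using R8[OF eh assms(9)] weq_wz by simp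
  qed
  then show ?thesis unfolding W by (rule wz_ctx[OF _ gX])
qed

definition Bs where
  "Bs = {cl (wmono R (cw v a b) c) | v a b c. v \<in> E0 \<and> pto v a \<and> pto v b \<and> length a = length b \<and> c \<in> carrier R}"

lemma gw_cw: "v \<in> E0 \<Longrightarrow> pto v a \<Longrightarrow> pto v b \<Longrightarrow> gw (cw v a b)"
  using pto_E1 by (auto simp: cw_def)

lemma prod_cases:
  assumes "v \<in> E0" "u \<in> E0" "pto v a" "pto v b" "pto u g" "pto u d"
    and "length a = length b" "length g = length d"
  shows "wz (cw v a b @ cw u g d) \<or>
    (\<exists>v' a' d'. v' \<in> E0 \<and> pto v' a' \<and> pto v' d' \<and> length a' = length d' \<and>
        weq (cw v a b @ cw u g d) (cw v' a' d'))"
proof -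
  have E: "set a \<subseteq> E1" "set b \<subseteq> E1" "set g \<subseteq> E1" "set d \<subseteq> E1"
    using pto_E1[OF assms(3)] pto_E1[OF assms(4)] pto_E1[OF assms(5)] pto_E1[OF assms(6)] by auto
  have ch: "chn a" "chn b" "chn g" "chn d" using assms by (auto simp: pto_def)
  consider (i) g' where "g = b @ g'" | (ii) b' where "b = g @ b'" "b' \<noteq> []"
    | (iii) p e h b1 g1 where "e \<noteq> h" "b = p @ e # b1" "g = p @ h # g1"
    using list_cases3[of g b] by blast
  then show ?thesis
  proof cases
    case i
    note W1 = caseI[OF assms(1-6) i]
    show ?thesis
    proof (cases g')
      case Nil
      show ?thesis
      proof (cases "v = u")
        case True
        have "weq (cw v a b @ cw u g d) (cw v a d)"
          using weq_trans[OF W1 weq_ctxI[OF R2[OF assms(1)], of "map Ed a" "map Gh (rev d)"]] Nil True E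
          by (simp add: cw_def)
        moreover have "length a = length d" using assms i Nil by simp
        ultimately show ?thesis using assms True by blast
      next
        case False
        have "wz (map Ed a @ [V v, V u] @ map Gh (rev d))"
          by (rule wz_ctx[OF R1[OF assms(1,2) False]]) (use E in auto)
        then show ?thesis using weq_wz[OF W1] Nil by simp
      qed
    next
      case (Cons h g'')
      have hE: "h \<in> E1" using E i Cons by auto
      show ?thesis
      proof (cases "s h = v")
        case False
        have "wz (map Ed a @ [V v, Ed h] @ (map Ed g'' @ [V u] @ map Gh (rev d)))"
          by (rule wz_ctx[OF Z1[OF assms(1) hE]]) (use E False i Cons assms in auto)
        then show ?thesis using weq_wz[OF W1] Cons by simp
      next
        case True
        have "weq (map Ed a @ [V v] @ map Ed g' @ [V u] @ map Gh (rev d))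
                  (map Ed a @ [Ed h] @ (map Ed g'' @ [V u] @ map Gh (rev d)))"
          by (rule weq_ctxI[OF R3[OF hE]]) (use E True i Cons assms in auto)
        then have "weq (cw v a b @ cw u g d) (cw u (a @ g') d)"
          using weq_trans[OF W1] Cons by (simp add: cw_def)
        moreover have "pto u (a @ g')"
        proof -
          have "chn g'" using ch(3) i by (simp add: chn_append)
          moreover have "a \<noteq> [] \<Longrightarrow> s h = r (last a)"
            using True assms(3) by (simp add: pto_def)
          moreover have "r (last g') = u" using assms(6,5) i Cons by (auto simp: pto_def)
          ultimately show ?thesis using ch Cons by (auto simp: pto_def chn_append)
        qed
        moreover have "length (a @ g') = length d" using assms i by simp
        ultimately show ?thesis using assms by blast
      qed
    qed
  next
    case ii
    note W2 = caseII[OF assms(1-6) ii(1)]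
    obtain h b'' where b'2: "b' = h # b''" using ii(2) by (cases b') auto
    have hE: "h \<in> E1" using E ii b'2 by auto
    have rb: "map Gh (rev b') = map Gh (rev b'') @ [Gh h]" using b'2 by simp
    have gb: "gw (map Ed a @ [V v] @ map Gh (rev b''))" "gw (map Gh (rev d))"
      using E ii b'2 assms by auto
    show ?thesis
    proof (cases "s h = u")
      case False
      have "wz ((map Ed a @ [V v] @ map Gh (rev b'')) @ [Gh h, V u] @ map Gh (rev d))"
        by (rule wz_ctx[OF Z2[OF assms(2) hE] gb]) (use False in auto)
      then have "wz (map Ed a @ [V v] @ map Gh (rev b') @ [V u] @ map Gh (rev d))" using b'2 by simp
      then show ?thesis using weq_wz[OF W2] by blast
    next
      case True
      have "weq ((map Ed a @ [V v] @ map Gh (rev b'')) @ [Gh h, V u] @ map Gh (rev d))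
                ((map Ed a @ [V v] @ map Gh (rev b'')) @ [Gh h] @ map Gh (rev d))"
        by (rule weq_ctx[OF R6[OF hE, unfolded True] gb])
      then have "weq (map Ed a @ [V v] @ map Gh (rev b') @ [V u] @ map Gh (rev d)) (cw v a (d @ b'))"
        using b'2 by (simp add: cw_def)
      then have "weq (cw v a b @ cw u g d) (cw v a (d @ b'))"
        using weq_trans[OF W2] by blast
      moreover have "pto v (d @ b')"
      proof -
        have "chn b'" using ch(2) ii by (simp add: chn_append)
        moreover have "d \<noteq> [] \<Longrightarrow> s (hd b') = r (last d)"
          using True assms(6) b'2 by (auto simp: pto_def)
        moreover have "r (last b') = v" using assms(4) ii by (auto simp: pto_def)
        ultimately show ?thesis using ch ii by (auto simp: pto_def chn_append)
      qed
      moreover have "length a = length (d @ b')" using assms ii by simp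
      ultimately show ?thesis using assms by blast
    qed
  next
    case iii
    then show ?thesis using caseIII[OF assms(1-6) iii(2,3,1)] by blast
  qed
qed

end

context ring
begin
lemma finsum_lessThan_add:
  fixes n m :: nat
  assumes "\<And>i. f i \<in> carrier R"
  shows "finsum R f {..<n + m} = finsum R f {..<n} \<oplus> finsum R (\<lambda>i. f (i + n)) {..<m}"
proof (induction m)
  case 0 then show ?case using assms by (simp add: Pi_def)
next
  case (Suc m)
  have "finsum R f {..<n + Suc m} = f (n + m) \<oplus> finsum R f {..<n + m}"
    using assms by (simp add: lessThan_Suc Pi_def)
  also have "\<dots> = f (n + m) \<oplus> (finsum R f {..<n} \<oplus> finsum R (\<lambda>i. f (i + n)) {..<m})"
    using Suc by simp
  also have "\<dots> = finsum R f {..<n} \<oplus> (f (m + n) \<oplus> finsum R (\<lambda>i. f (i + n)) {..<m})"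
    using assms by (simp add: a_lcomm add.commute Pi_def)
  also have "f (m + n) \<oplus> finsum R (\<lambda>i. f (i + n)) {..<m} = finsum R (\<lambda>i. f (i + n)) {..<Suc m}"
    using assms by (simp add: lessThan_Suc Pi_def)
  finally show ?case .
qed
end

context LPA_loc
begin

lemma ringL_facts: "ring L" by (rule ring_L)

lemma Bs_carrier: "Bs \<subseteq> carrier L"
  unfolding Bs_def using gw_cw by (auto intro!: cl_carrier wmono_carrier simp: gw_def)

lemma zeroF: "\<zero>\<^bsub>F\<^esub> = (\<lambda>w. \<zero>)" by (simp add: F_simps)

lemma cl_zeroF: "cl (\<lambda>w. \<zero>) = \<zero>\<^bsub>L\<^esub>"
proof -
  interpret FR: ring F by (rule ring_F)
  interpret FI: ideal I F by (rule I_ideal)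
  have "\<zero>\<^bsub>F\<^esub> \<in> I" by (rule FI.additive_subgroup_axioms[THEN additive_subgroup.zero_closed])
  then show ?thesis using cl_zero_iff[of "\<zero>\<^bsub>F\<^esub>"] by (simp add: zeroF)
qed

lemma Bs_mult:
  assumes "x \<in> Bs" "y \<in> Bs" shows "x \<otimes>\<^bsub>L\<^esub> y \<in> Bs \<union> {\<zero>\<^bsub>L\<^esub>}"
proof -
  obtain v a b c where x: "x = cl (wmono R (cw v a b) c)" "v \<in> E0" "pto v a" "pto v b"
    "length a = length b" "c \<in> carrier R" using assms(1) by (auto simp: Bs_def)
  obtain u g d e where y: "y = cl (wmono R (cw u g d) e)" "u \<in> E0" "pto u g" "pto u d"
    "length g = length d" "e \<in> carrier R" using assms(2) by (auto simp: Bs_def)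
  have xy: "x \<otimes>\<^bsub>L\<^esub> y = cl (wmono R (cw v a b @ cw u g d) (c \<otimes> e))"
    using x y gw_cw by (simp add: cl_mult wmono_carrier gw_def wmono_multF)
  have ce: "c \<otimes> e \<in> carrier R" using x y by simp
  from prod_cases[OF x(2) y(2) x(3,4) y(3,4) x(5) y(5)]
  show ?thesis
  proof (elim disjE exE conjE)
    assume "wz (cw v a b @ cw u g d)"
    then show ?thesis using xy wz_c ce by simp
  next
    fix v' a' d' assume h: "v' \<in> E0" "pto v' a'" "pto v' d'" "length a' = length d'"
      "weq (cw v a b @ cw u g d) (cw v' a' d')"
    then show ?thesis using xy weq_c[OF h(5) ce] ce by (auto simp: Bs_def)
  qed
qed

lemma Bs_neg:
  assumes "x \<in> Bs" shows "\<ominus>\<^bsub>L\<^esub> x \<in> Bs"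
proof -
  interpret LR: ring L by (rule ring_L)
  obtain v a b c where x: "x = cl (wmono R (cw v a b) c)" "v \<in> E0" "pto v a" "pto v b"
    "length a = length b" "c \<in> carrier R" using assms(1) by (auto simp: Bs_def)
  have g: "set (cw v a b) \<subseteq> gens E0 E1" using gw_cw x by (simp add: gw_def)
  have "cl (wmono R (cw v a b) (\<ominus> c)) \<oplus>\<^bsub>L\<^esub> x = cl (wmono R (cw v a b) (\<ominus> c) \<oplus>\<^bsub>F\<^esub> wmono R (cw v a b) c)"
    using x g by (simp add: cl_add wmono_carrier)
  also have "wmono R (cw v a b) (\<ominus> c) \<oplus>\<^bsub>F\<^esub> wmono R (cw v a b) c = (\<lambda>w. \<zero>)"
    using x by (auto simp: F_simps wmono_def fun_eq_iff l_neg)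
  finally have "cl (wmono R (cw v a b) (\<ominus> c)) \<oplus>\<^bsub>L\<^esub> x = \<zero>\<^bsub>L\<^esub>" by (simp add: cl_zeroF)
  then have "\<ominus>\<^bsub>L\<^esub> x = cl (wmono R (cw v a b) (\<ominus> c))"
    using LR.minus_equality x g by (simp add: cl_carrier wmono_carrier)
  moreover have "cl (wmono R (cw v a b) (\<ominus> c)) \<in> Bs"
    using x add.inv_closed[OF x(6)] unfolding Bs_def by blast
  ultimately show ?thesis by simp
qed

inductive_set SS where
  SS_B: "x \<in> Bs \<Longrightarrow> x \<in> SS"
| SS_0: "\<zero>\<^bsub>L\<^esub> \<in> SS"
| SS_add: "x \<in> SS \<Longrightarrow> y \<in> SS \<Longrightarrow> x \<oplus>\<^bsub>L\<^esub> y \<in> SS"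

lemma SS_carrier: "x \<in> SS \<Longrightarrow> x \<in> carrier L"
proof (induction rule: SS.induct)
  case (SS_B x) then show ?case using Bs_carrier by auto
next
  case SS_0 then show ?case using ring.ring_simprules(2)[OF ring_L] by simp
next
  case (SS_add x y) then show ?case using ring.ring_simprules(1)[OF ring_L] by simp
qed

lemma SS_neg: "x \<in> SS \<Longrightarrow> \<ominus>\<^bsub>L\<^esub> x \<in> SS"
proof (induction rule: SS.induct)
  case (SS_B x) then show ?case using Bs_neg SS.SS_B by auto
next
  case SS_0 then show ?case using ring.minus_zero[OF ring_L] SS.SS_0 by simp
next
  case (SS_add x y)
  interpret LR: ring L by (rule ring_L)
  show ?case using SS_add SS_carrier LR.minus_add by (simp add: SS.SS_add)
qed

lemma SS_multB: "y \<in> SS \<Longrightarrow> x \<in> Bs \<Longrightarrow> x \<otimes>\<^bsub>L\<^esub> y \<in> SS"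
proof (induction rule: SS.induct)
  case (SS_B y) then show ?case using Bs_mult[of x y] SS.SS_B SS.SS_0 by auto
next
  case SS_0
  interpret LR: ring L by (rule ring_L)
  show ?case using SS_0 Bs_carrier SS.SS_0 by auto
next
  case (SS_add y z)
  interpret LR: ring L by (rule ring_L)
  show ?case using SS_add SS_carrier Bs_carrier LR.r_distr SS.SS_add by (simp add: subset_iff)
qed

lemma SS_mult: "x \<in> SS \<Longrightarrow> y \<in> SS \<Longrightarrow> x \<otimes>\<^bsub>L\<^esub> y \<in> SS"
proof (induction rule: SS.induct)
  case (SS_B x) then show ?case using SS_multB by auto
next
  case SS_0
  interpret LR: ring L by (rule ring_L)
  show ?case using SS_0 SS_carrier SS.SS_0 by auto
next
  case (SS_add x z)
  interpret LR: ring L by (rule ring_L)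
  show ?case using SS_add SS_carrier LR.l_distr SS.SS_add by simp
qed

end

context LPA_loc
begin

definition sumfun :: "(nat \<Rightarrow> ('v,'e) gen list) \<Rightarrow> (nat \<Rightarrow> 'r) \<Rightarrow> nat \<Rightarrow> (('v,'e) gen list \<Rightarrow> 'r)" where
  "sumfun W c n = (\<lambda>w. finsum R (\<lambda>i. if w = W i then c i else \<zero>) {..<n})"

lemma sf_0: "sumfun W c 0 = (\<lambda>w. \<zero>)" by (simp add: sumfun_def)

lemma sf_Suc:
  assumes "\<forall>i<Suc n. c i \<in> carrier R"
  shows "sumfun W c (Suc n) = sumfun W c n \<oplus>\<^bsub>F\<^esub> wmono R (W n) (c n)"
proof -
  have "finsum R (\<lambda>i. if w = W i then c i else \<zero>) {..<Suc n}
      = (if w = W n then c n else \<zero>) \<oplus> finsum R (\<lambda>i. if w = W i then c i else \<zero>) {..<n}" for w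
    using assms by (simp add: lessThan_Suc Pi_def)
  then show ?thesis using assms
    by (auto simp: sumfun_def F_simps wmono_def fun_eq_iff a_comm Pi_def intro!: finsum_closed)
qed

lemma sf_carrier: "\<forall>i<n. gw (W i) \<and> c i \<in> carrier R \<Longrightarrow> sumfun W c n \<in> carrier F"
proof (induction n)
  case 0 then show ?case using ring.ring_simprules(2)[OF ring_F] by (simp add: sf_0 zeroF)
next
  case (Suc n)
  then show ?case using sf_Suc[of n c W] ring.ring_simprules(1)[OF ring_F] wmono_carrier
    by (simp add: gw_def)
qed

lemma is_path_iff: "is_path E0 E1 s r p \<longleftrightarrow> fst p \<in> E0 \<and> (snd p = [] \<or> (snd p \<noteq> [] \<and> chn (snd p) \<and> s (hd (snd p)) = fst p))"
  by (auto simp: is_path_def edge_path_chn)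

lemma gw_pword: "is_path E0 E1 s r p \<Longrightarrow> gw (pword p @ pword_star p')  \<longleftrightarrow> gw (pword_star p')"
  by (auto simp: is_path_iff pword_def chn_def)

lemma gw_pw2: "is_path E0 E1 s r p \<Longrightarrow> is_path E0 E1 s r p' \<Longrightarrow> gw (pword p @ pword_star p')"
  by (auto simp: is_path_iff pword_def pword_star_def chn_def)

lemma edV: "a \<noteq> [] \<Longrightarrow> chn a \<Longrightarrow> gw Z \<Longrightarrow> weq (map Ed a @ Z) (map Ed a @ [V (r (last a))] @ Z)"
proof -
  assume h: "a \<noteq> []" "chn a" "gw Z"
  obtain a0 e where a: "a = a0 @ [e]" using h(1) by (cases a rule: rev_cases) auto
  have E: "set a \<subseteq> E1" using h chn_E1 by auto
  show ?thesis
    by (rule weq_ctxI[OF weq_sym[OF R4[of e]], of "map Ed a0" Z]) (use a E h in auto)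
qed

lemma ghV: "b \<noteq> [] \<Longrightarrow> chn b \<Longrightarrow> gw Z \<Longrightarrow> weq (Z @ map Gh (rev b)) (Z @ [V (r (last b))] @ map Gh (rev b))"
proof -
  assume h: "b \<noteq> []" "chn b" "gw Z"
  obtain b0 e where b: "b = b0 @ [e]" using h(1) by (cases b rule: rev_cases) auto
  have E: "set b \<subseteq> E1" using h chn_E1 by auto
  show ?thesis
    by (rule weq_ctxI[OF weq_sym[OF R5[of e]], of Z "map Gh (rev b0)"]) (use b E h in auto)
qed

lemma lemEG:
  assumes "a \<noteq> []" "chn a" "b \<noteq> []" "chn b"
  shows "weq (map Ed a @ map Gh (rev b)) (map Ed a @ [V (r (last a))] @ [V (r (last b))] @ map Gh (rev b))"
proof -
  have E: "set a \<subseteq> E1" "set b \<subseteq> E1" using assms chn_E1 by auto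
  have la: "r (last a) \<in> E0" using rE0[of "last a"] E assms(1) last_in_set by blast
  have "weq (map Ed a @ map Gh (rev b)) (map Ed a @ [V (r (last a))] @ map Gh (rev b))"
    by (rule edV) (use assms E in auto)
  also have "weq (map Ed a @ [V (r (last a))] @ map Gh (rev b)) ((map Ed a @ [V (r (last a))]) @ [V (r (last b))] @ map Gh (rev b))"
    using ghV[of b "map Ed a @ [V (r (last a))]"] assms E la by simp
  finally show ?thesis by simp
qed

lemma convB:
  assumes a: "is_path E0 E1 s r a" and b: "is_path E0 E1 s r b" and l: "plen a = plen b"
    and c: "c \<in> carrier R"
  shows "cl (wmono R (pword a @ pword_star b) c) \<in> Bs \<union> {\<zero>\<^bsub>L\<^esub>}"
proof (cases "snd a = []")
  case True
  then have b0: "snd b = []" using l by (simp add: plen_def)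
  have w: "pword a @ pword_star b = [V (fst a), V (fst b)]" using True b0 by (simp add: pword_def pword_star_def)
  have v: "fst a \<in> E0" "fst b \<in> E0" using a b by (auto simp: is_path_iff)
  show ?thesis
  proof (cases "fst a = fst b")
    case True
    have "cl (wmono R (pword a @ pword_star b) c) = cl (wmono R (cw (fst a) [] []) c)"
      using weq_c[OF R2[OF v(1)] c] w True by (simp add: cw_def)
    moreover have "pto (fst a) []" by (simp add: pto_def)
    ultimately show ?thesis unfolding Bs_def using v c by blast
  next
    case False
    then show ?thesis using wz_c[OF R1[OF v False] c] w by simp
  qed
next
  case False
  then have b0: "snd b \<noteq> []" using l by (auto simp: plen_def)
  have ch: "chn (snd a)" "chn (snd b)" using a b False b0 by (auto simp: is_path_iff)
  have w: "pword a @ pword_star b = map Ed (snd a) @ map Gh (rev (snd b))"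
    using False b0 by (simp add: pword_def pword_star_def)
  have E: "set (snd a) \<subseteq> E1" "set (snd b) \<subseteq> E1" using ch chn_E1 by auto
  have v: "r (last (snd a)) \<in> E0" "r (last (snd b)) \<in> E0"
    using rE0[of "last (snd a)"] rE0[of "last (snd b)"] E False b0 last_in_set by blast+
  note W = lemEG[OF False ch(1) b0 ch(2)]
  show ?thesis
  proof (cases "r (last (snd a)) = r (last (snd b))")
    case True
    have "weq (map Ed (snd a) @ [V (r (last (snd a)))] @ [V (r (last (snd b)))] @ map Gh (rev (snd b)))
              (map Ed (snd a) @ [V (r (last (snd a)))] @ map Gh (rev (snd b)))"
      by (rule weq_ctxI[OF R2[OF v(1)], of "map Ed (snd a)" "map Gh (rev (snd b))"]) (use E True in auto)
    then have "cl (wmono R (pword a @ pword_star b) c) = cl (wmono R (cw (r (last (snd a))) (snd a) (snd b)) c)"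
      using weq_c[OF weq_trans[OF W] c] w by (simp add: cw_def)
    moreover have "pto (r (last (snd a))) (snd a)" "pto (r (last (snd a))) (snd b)"
      using ch True by (auto simp: pto_def)
    moreover have "length (snd a) = length (snd b)" using l by (simp add: plen_def)
    ultimately show ?thesis unfolding Bs_def using v c by blast
  next
    case False
    have "wz (map Ed (snd a) @ [V (r (last (snd a))), V (r (last (snd b)))] @ map Gh (rev (snd b)))"
      by (rule wz_ctx[OF R1[OF v False]]) (use E in auto)
    then show ?thesis using weq_wz[OF W] wz_c c w by simp
  qed
qed

lemma LPA0_sub_SS: "LPA0 R E0 E1 s r \<subseteq> SS"
proof
  fix x assume "x \<in> LPA0 R E0 E1 s r"
  then obtain n c a b where h: "\<forall>i<n. c i \<in> carrier R \<and> is_path E0 E1 s r (a i) \<and> is_path E0 E1 s r (b i)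
              \<and> plen (a i) = plen (b i)"
    and x: "x = cl (sumfun (\<lambda>i. pword (a i) @ pword_star (b i)) c n)"
    unfolding LPA0_def sumfun_def by blast
  have "k \<le> n \<Longrightarrow> cl (sumfun (\<lambda>i. pword (a i) @ pword_star (b i)) c k) \<in> SS" for k
  proof (induction k)
    case 0 then show ?case using SS.SS_0 cl_zeroF by (simp add: sf_0)
  next
    case (Suc k)
    have hi: "\<And>i. i < n \<Longrightarrow> gw (pword (a i) @ pword_star (b i))" using h gw_pw2 by blast
    have hk: "\<forall>i<k. gw (pword (a i) @ pword_star (b i)) \<and> c i \<in> carrier R"
      using hi h Suc.prems by (metis Suc_leD order.strict_trans2)
    have k: "k < n" using Suc by simp
    have "cl (sumfun (\<lambda>i. pword (a i) @ pword_star (b i)) c (Suc k))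
        = cl (sumfun (\<lambda>i. pword (a i) @ pword_star (b i)) c k) \<oplus>\<^bsub>L\<^esub> cl (wmono R (pword (a k) @ pword_star (b k)) (c k))"
      using sf_Suc[of k c] h k sf_carrier[OF hk] gw_pw2[of "a k" "b k"]
      by (simp add: cl_add wmono_carrier gw_def)
    moreover have "cl (wmono R (pword (a k) @ pword_star (b k)) (c k)) \<in> SS"
      using convB[of "a k" "b k" "c k"] h k SS.SS_0 SS.SS_B by auto
    ultimately show ?case using Suc SS.SS_add by simp
  qed
  then show "x \<in> SS" using x by simp
qed

end

context LPA_loc
begin

lemma LPA0_intro:
  assumes "\<forall>i<n. c i \<in> carrier R \<and> is_path E0 E1 s r (a i) \<and> is_path E0 E1 s r (b i) \<and> plen (a i) = plen (b i)"
  shows "cl (sumfun (\<lambda>i. pword (a i) @ pword_star (b i)) c n) \<in> LPA0 R E0 E1 s r"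
  unfolding LPA0_def sumfun_def using assms by blast

lemma sf_1: "c 0 \<in> carrier R \<Longrightarrow> sumfun W c 1 = wmono R (W 0) (c 0)"
  using sf_Suc[of 0 c W] by (auto simp: sf_0 F_simps wmono_def fun_eq_iff)

lemma zero_LPA0: "\<zero>\<^bsub>L\<^esub> \<in> LPA0 R E0 E1 s r"
  using LPA0_intro[of 0] by (simp add: sf_0 cl_zeroF)

lemma EG_cw:
  assumes "a \<noteq> []" "chn a" "b \<noteq> []" "chn b" "r (last a) = v" "r (last b) = v" "v \<in> E0"
  shows "weq (map Ed a @ map Gh (rev b)) (cw v a b)"
proof -
  have E: "set a \<subseteq> E1" "set b \<subseteq> E1" using assms chn_E1 by auto
  have "weq (map Ed a @ [V v] @ [V v] @ map Gh (rev b)) (map Ed a @ [V v] @ map Gh (rev b))"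
    by (rule weq_ctxI[OF R2[OF assms(7)], of "map Ed a" "map Gh (rev b)"]) (use E in auto)
  then show ?thesis using weq_trans[OF lemEG[OF assms(1-4)]] assms by (simp add: cw_def)
qed

lemma Bs_LPA0: "Bs \<subseteq> LPA0 R E0 E1 s r"
proof
  fix x assume "x \<in> Bs"
  then obtain v a b c where x: "x = cl (wmono R (cw v a b) c)" "v \<in> E0" "pto v a" "pto v b"
    "length a = length b" "c \<in> carrier R" by (auto simp: Bs_def)
  show "x \<in> LPA0 R E0 E1 s r"
  proof (cases "a = []")
    case True
    then have b: "b = []" using x by simp
    have "cl (sumfun (\<lambda>i. pword (v, []) @ pword_star (v, [])) (\<lambda>_. c) 1) \<in> LPA0 R E0 E1 s r"
      by (rule LPA0_intro) (use x in \<open>auto simp: is_path_iff\<close>)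
    moreover have "cl (sumfun (\<lambda>i. pword (v, []) @ pword_star (v, [])) (\<lambda>_. c) 1) = x"
      using x True b sf_1[of "\<lambda>_. c"] weq_c[OF R2[OF x(2)] x(6)] by (simp add: pword_def pword_star_def cw_def)
    ultimately show ?thesis by simp
  next
    case False
    then have b: "b \<noteq> []" using x by auto
    have ch: "chn a" "chn b" "r (last a) = v" "r (last b) = v" using x False b by (auto simp: pto_def)
    have sa: "s (hd a) \<in> E0" "s (hd b) \<in> E0" using ch chn_E1 False b sE0 by (auto simp: hd_in_set subset_iff)
    have "cl (sumfun (\<lambda>i. pword (s (hd a), a) @ pword_star (s (hd b), b)) (\<lambda>_. c) 1) \<in> LPA0 R E0 E1 s r"
      by (rule LPA0_intro) (use x False b ch sa in \<open>auto simp: is_path_iff plen_def\<close>)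
    moreover have "cl (sumfun (\<lambda>i. pword (s (hd a), a) @ pword_star (s (hd b), b)) (\<lambda>_. c) 1) = x"
      using x False b sf_1[of "\<lambda>_. c"] weq_c[OF EG_cw[OF False ch(1) b ch(2-4) x(2)] x(6)]
      by (simp add: pword_def pword_star_def)
    ultimately show ?thesis by simp
  qed
qed

lemma add_LPA0:
  assumes "x \<in> LPA0 R E0 E1 s r" "y \<in> LPA0 R E0 E1 s r"
  shows "x \<oplus>\<^bsub>L\<^esub> y \<in> LPA0 R E0 E1 s r"
proof -
  obtain n1 c1 a1 b1 where h1: "\<forall>i<n1. c1 i \<in> carrier R \<and> is_path E0 E1 s r (a1 i) \<and> is_path E0 E1 s r (b1 i)
              \<and> plen (a1 i) = plen (b1 i)"
    and x: "x = cl (sumfun (\<lambda>i. pword (a1 i) @ pword_star (b1 i)) c1 n1)"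
    using assms(1) unfolding LPA0_def sumfun_def by blast
  obtain n2 c2 a2 b2 where h2: "\<forall>i<n2. c2 i \<in> carrier R \<and> is_path E0 E1 s r (a2 i) \<and> is_path E0 E1 s r (b2 i)
              \<and> plen (a2 i) = plen (b2 i)"
    and y: "y = cl (sumfun (\<lambda>i. pword (a2 i) @ pword_star (b2 i)) c2 n2)"
    using assms(2) unfolding LPA0_def sumfun_def by blast
  define a where "a = (\<lambda>i. if i < n1 then a1 i else a2 (i - n1))"
  define b where "b = (\<lambda>i. if i < n1 then b1 i else b2 (i - n1))"
  define c where "c = (\<lambda>i. if i < n1 then c1 i else if i < n1 + n2 then c2 (i - n1) else \<zero>)"
  have h: "\<forall>i<n1 + n2. c i \<in> carrier R \<and> is_path E0 E1 s r (a i) \<and> is_path E0 E1 s r (b i) \<and> plen (a i) = plen (b i)"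
    using h1 h2 by (auto simp: a_def b_def c_def)
  have cc: "c i \<in> carrier R" for i using h1 h2 by (auto simp: c_def)
  have gw1: "\<forall>i<n1. gw (pword (a1 i) @ pword_star (b1 i)) \<and> c1 i \<in> carrier R"
    using h1 gw_pw2 by blast
  have gw2: "\<forall>i<n2. gw (pword (a2 i) @ pword_star (b2 i)) \<and> c2 i \<in> carrier R"
    using h2 gw_pw2 by blast
  have eq: "sumfun (\<lambda>i. pword (a i) @ pword_star (b i)) c (n1 + n2)
      = sumfun (\<lambda>i. pword (a1 i) @ pword_star (b1 i)) c1 n1 \<oplus>\<^bsub>F\<^esub> sumfun (\<lambda>i. pword (a2 i) @ pword_star (b2 i)) c2 n2"
  proof -
    have "finsum R (\<lambda>i. if w = pword (a i) @ pword_star (b i) then c i else \<zero>) {..<n1 + n2}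
        = finsum R (\<lambda>i. if w = pword (a1 i) @ pword_star (b1 i) then c1 i else \<zero>) {..<n1}
          \<oplus> finsum R (\<lambda>i. if w = pword (a2 i) @ pword_star (b2 i) then c2 i else \<zero>) {..<n2}" for w
    proof -
      have "finsum R (\<lambda>i. if w = pword (a i) @ pword_star (b i) then c i else \<zero>) {..<n1 + n2}
        = finsum R (\<lambda>i. if w = pword (a i) @ pword_star (b i) then c i else \<zero>) {..<n1}
          \<oplus> finsum R (\<lambda>i. if w = pword (a (i + n1)) @ pword_star (b (i + n1)) then c (i + n1) else \<zero>) {..<n2}"
        by (rule finsum_lessThan_add) (use cc in auto)
      also have "finsum R (\<lambda>i. if w = pword (a i) @ pword_star (b i) then c i else \<zero>) {..<n1}
          = finsum R (\<lambda>i. if w = pword (a1 i) @ pword_star (b1 i) then c1 i else \<zero>) {..<n1}"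
        by (rule add.finprod_cong') (use h1 in \<open>auto simp: a_def b_def c_def\<close>)
      also have "finsum R (\<lambda>i. if w = pword (a (i + n1)) @ pword_star (b (i + n1)) then c (i + n1) else \<zero>) {..<n2}
          = finsum R (\<lambda>i. if w = pword (a2 i) @ pword_star (b2 i) then c2 i else \<zero>) {..<n2}"
        by (rule add.finprod_cong') (use h2 in \<open>auto simp: a_def b_def c_def\<close>)
      finally show ?thesis .
    qed
    then show ?thesis by (simp add: sumfun_def F_simps)
  qed
  have "x \<oplus>\<^bsub>L\<^esub> y = cl (sumfun (\<lambda>i. pword (a i) @ pword_star (b i)) c (n1 + n2))"
    using x y eq cl_add sf_carrier[OF gw1] sf_carrier[OF gw2] by simp
  then show ?thesis using LPA0_intro[OF h] by simp
qed

lemma SS_sub_LPA0: "SS \<subseteq> LPA0 R E0 E1 s r"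
proof
  fix x assume "x \<in> SS"
  then show "x \<in> LPA0 R E0 E1 s r"
    by (induction rule: SS.induct) (use Bs_LPA0 zero_LPA0 add_LPA0 in auto)
qed

lemma LPA0_SS: "LPA0 R E0 E1 s r = SS"
  using SS_sub_LPA0 LPA0_sub_SS by blast

end

context LPA_loc
begin

definition fne :: "'v \<Rightarrow> bool" where
  "fne v \<longleftrightarrow> {e \<in> E1. s e = v} \<noteq> {} \<and> finite {e \<in> E1. s e = v}"

definition good :: "(nat \<Rightarrow> 'v \<times> 'e option) \<Rightarrow> bool" where
  "good x \<longleftrightarrow> (\<forall>n. case snd (x n) of
      Some e \<Rightarrow> e \<in> E1 \<and> s e = fst (x n) \<and> fst (x (Suc n)) = r e
    | None \<Rightarrow> \<not> fne (fst (x n)) \<and> x (Suc n) = x n)"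

definition pre :: "'e \<Rightarrow> (nat \<Rightarrow> 'v \<times> 'e option) \<Rightarrow> (nat \<Rightarrow> 'v \<times> 'e option)" where
  "pre e y = (\<lambda>n. case n of 0 \<Rightarrow> (s e, Some e) | Suc m \<Rightarrow> y m)"

fun Tg :: "('v, 'e) gen \<Rightarrow> ((nat \<Rightarrow> 'v \<times> 'e option) \<Rightarrow> 'r) \<Rightarrow> (nat \<Rightarrow> 'v \<times> 'e option) \<Rightarrow> 'r" where
  "Tg (V v) \<psi> x = (if good x \<and> fst (x 0) = v then \<psi> x else \<zero>)"
| "Tg (Ed e) \<psi> x = (if good x \<and> snd (x 0) = Some e then \<psi> (\<lambda>n. x (Suc n)) else \<zero>)"
| "Tg (Gh e) \<psi> x = (if good x \<and> fst (x 0) = r e \<and> e \<in> E1 then \<psi> (pre e x) else \<zero>)"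

definition T :: "('v, 'e) gen list \<Rightarrow> ((nat \<Rightarrow> 'v \<times> 'e option) \<Rightarrow> 'r) \<Rightarrow> (nat \<Rightarrow> 'v \<times> 'e option) \<Rightarrow> 'r" where
  "T w = foldr Tg w"

lemma T_simps[simp]: "T [] \<psi> = \<psi>" "T (g # w) \<psi> = Tg g (T w \<psi>)"
  by (simp_all add: T_def)

lemma T_append: "T (u @ v) \<psi> = T u (T v \<psi>)"
  by (simp add: T_def)

lemma Tg_shape: "\<exists>P y. \<forall>\<psi>. Tg g \<psi> x = (if P then \<psi> y else \<zero>)"
  by (cases g) auto

lemma T_shape: "\<exists>P y. \<forall>\<psi>. T w \<psi> x = (if P then \<psi> y else \<zero>)"
proof (induction w arbitrary: x)
  case Nil then show ?case by (rule exI[of _ True]) auto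
next
  case (Cons g w)
  obtain P y where P: "\<forall>\<psi>. Tg g \<psi> x = (if P then \<psi> y else \<zero>)" using Tg_shape by blast
  obtain P' y' where P': "\<forall>\<psi>. T w \<psi> y = (if P' then \<psi> y' else \<zero>)" using Cons by blast
  show ?case by (rule exI[of _ "P \<and> P'"], rule exI[of _ y']) (simp add: P P')
qed

lemma T_carrier: "(\<And>x. \<phi> x \<in> carrier R) \<Longrightarrow> T w \<phi> x \<in> carrier R"
  using T_shape[of w x] by (metis zero_closed)

lemma Tg_zero: "Tg g (\<lambda>_. \<zero>) x = \<zero>" by (cases g) auto

lemma T_zero: "T w (\<lambda>_. \<zero>) x = \<zero>"
proof (induction w arbitrary: x)
  case (Cons g w)
  then have "T w (\<lambda>_. \<zero>) = (\<lambda>_. \<zero>)" by auto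
  then show ?case by (simp add: Tg_zero)
qed simp

definition rho :: "(('v,'e) gen list \<Rightarrow> 'r) \<Rightarrow> ((nat \<Rightarrow> 'v \<times> 'e option) \<Rightarrow> 'r) \<Rightarrow> (nat \<Rightarrow> 'v \<times> 'e option) \<Rightarrow> 'r" where
  "rho a \<phi> x = LL (\<lambda>w. T w \<phi> x) a"

lemma rho_carrier: "fs a \<Longrightarrow> (\<And>x. \<phi> x \<in> carrier R) \<Longrightarrow> rho a \<phi> x \<in> carrier R"
  unfolding rho_def by (rule LL_closed) (auto intro: T_carrier)

lemma T_linear:
  assumes b: "fs b" and \<phi>: "\<And>x. \<phi> x \<in> carrier R"
  shows "LL (\<lambda>v. T u (T v \<phi>) x) b = T u (rho b \<phi>) x"
proof -
  obtain P y where P: "\<forall>\<psi>. T u \<psi> x = (if P then \<psi> y else \<zero>)" using T_shape by blast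
  show ?thesis using LL_zero_fun[OF b] by (simp add: P rho_def)
qed

lemma rho_mult:
  assumes a: "fs a" and b: "fs b" and \<phi>: "\<And>x. \<phi> x \<in> carrier R"
  shows "rho (conv a b) \<phi> x = rho a (rho b \<phi>) x"
proof -
  have "rho (conv a b) \<phi> x = LL (\<lambda>u. LL (\<lambda>v. T (u @ v) \<phi> x) b) a"
    unfolding rho_def by (rule star[OF a b]) (rule T_carrier[OF \<phi>])
  also have "\<dots> = LL (\<lambda>u. T u (rho b \<phi>) x) a"
    by (rule LL_cong[OF a]) (use T_linear[OF b \<phi>] rho_carrier[OF b \<phi>] in \<open>auto simp: T_append intro: T_carrier\<close>)
  finally show ?thesis by (simp add: rho_def)
qed

lemma rho_add:
  assumes a: "fs a" and b: "fs b" and \<phi>: "\<And>x. \<phi> x \<in> carrier R"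
  shows "rho (\<lambda>w. a w \<oplus> b w) \<phi> x = rho a \<phi> x \<oplus> rho b \<phi> x"
proof -
  define W where "W = supp R a \<union> supp R b"
  have fW: "finite W" using a b by (simp add: W_def fs_def)
  have ac: "\<And>w. a w \<in> carrier R" "\<And>w. b w \<in> carrier R" using a b by (auto simp: fs_def)
  have Tc: "\<And>w. T w \<phi> x \<in> carrier R" by (rule T_carrier[OF \<phi>])
  have "rho (\<lambda>w. a w \<oplus> b w) \<phi> x = finsum R (\<lambda>w. (a w \<oplus> b w) \<otimes> T w \<phi> x) W"
    unfolding rho_def by (rule LL_sup) (use fW ac Tc in \<open>auto simp: W_def supp_def\<close>)
  also have "\<dots> = finsum R (\<lambda>w. a w \<otimes> T w \<phi> x \<oplus> b w \<otimes> T w \<phi> x) W"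
    by (rule add.finprod_cong') (use ac Tc in \<open>auto simp: l_distr\<close>)
  also have "\<dots> = finsum R (\<lambda>w. a w \<otimes> T w \<phi> x) W \<oplus> finsum R (\<lambda>w. b w \<otimes> T w \<phi> x) W"
    by (rule finsum_addf) (use ac Tc in auto)
  also have "finsum R (\<lambda>w. a w \<otimes> T w \<phi> x) W = rho a \<phi> x"
    unfolding rho_def by (rule LL_sup[symmetric]) (use fW ac Tc in \<open>auto simp: W_def\<close>)
  also have "finsum R (\<lambda>w. b w \<otimes> T w \<phi> x) W = rho b \<phi> x"
    unfolding rho_def by (rule LL_sup[symmetric]) (use fW ac Tc in \<open>auto simp: W_def\<close>)
  finally show ?thesis .
qed

lemma rho_zero: "rho (\<lambda>w. \<zero>) \<phi> x = \<zero>"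
  by (simp add: rho_def LL_def supp_def)

definition K where
  "K = {a \<in> carrier F. \<forall>\<phi>. (\<forall>x. \<phi> x \<in> carrier R) \<longrightarrow> (\<forall>x. rho a \<phi> x = \<zero>)}"

lemma K_ideal: "ideal K F"
proof (rule idealI[OF ring_F])
  interpret FR: ring F by (rule ring_F)
  show "subgroup K (add_monoid F)"
  proof
    show "K \<subseteq> carrier (add_monoid F)" by (auto simp: K_def)
    show "\<one>\<^bsub>add_monoid F\<^esub> \<in> K"
      using FR.zero_closed by (simp add: K_def F_simps rho_zero)
    fix a b assume ab: "a \<in> K" "b \<in> K"
    have abc: "a \<in> carrier F" "b \<in> carrier F" using ab by (auto simp: K_def)
    have c: "a \<oplus>\<^bsub>F\<^esub> b \<in> carrier F" using abc by simp
    have "rho (\<lambda>w. a w \<oplus> b w) \<phi> x = \<zero>" if \<phi>: "\<forall>x. \<phi> x \<in> carrier R" for \<phi> x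
      using rho_add[of a b \<phi> x] carrierF_fs[OF abc(1)] carrierF_fs[OF abc(2)] \<phi> ab by (simp add: K_def)
    then show "a \<otimes>\<^bsub>add_monoid F\<^esub> b \<in> K"
      using c by (simp add: K_def F_simps(5))
  next
    fix a assume a: "a \<in> K"
    have ac: "a \<in> carrier F" using a by (simp add: K_def)
    have nc: "(\<lambda>w. \<ominus> a w) \<in> carrier F" using minusF[OF ac] FR.add.inv_closed[OF ac] by simp
    have rz: "rho (\<lambda>w. \<ominus> a w) \<phi> x = \<zero>" if \<phi>: "\<forall>x. \<phi> x \<in> carrier R" for \<phi> x
    proof -
      have "rho (\<lambda>w. \<ominus> a w \<oplus> a w) \<phi> x = rho (\<lambda>w. \<ominus> a w) \<phi> x \<oplus> rho a \<phi> x"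
        by (rule rho_add) (use nc ac \<phi> carrierF_fs in auto)
      moreover have "(\<lambda>w. \<ominus> a w \<oplus> a w) = (\<lambda>w. \<zero>)"
        using ac by (auto simp: F_simps l_neg)
      moreover have "rho a \<phi> x = \<zero>" using a \<phi> by (simp add: K_def)
      ultimately show ?thesis using rho_zero rho_carrier[OF carrierF_fs[OF nc]] \<phi> by simp
    qed
    have "(\<lambda>w. \<ominus> a w) \<in> K" unfolding K_def mem_Collect_eq
    proof (intro conjI nc allI impI)
      fix \<phi> :: "(nat \<Rightarrow> 'v \<times> 'e option) \<Rightarrow> 'r" and x assume "\<forall>x. \<phi> x \<in> carrier R"
      then show "rho (\<lambda>w. \<ominus> a w) \<phi> x = \<zero>" by (rule rz)
    qed
    then have "\<ominus>\<^bsub>F\<^esub> a \<in> K" using minusF[OF ac] by simp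
    then show "inv\<^bsub>add_monoid F\<^esub> a \<in> K" unfolding a_inv_def .
  qed
next
  fix a x assume a: "a \<in> K" and x: "x \<in> carrier F"
  have ac: "a \<in> carrier F" using a by (simp add: K_def)
  show "x \<otimes>\<^bsub>F\<^esub> a \<in> K"
  proof -
    have "rho (conv x a) \<phi> y = \<zero>" if \<phi>: "\<forall>x. \<phi> x \<in> carrier R" for \<phi> y
    proof -
      have "rho a \<phi> = (\<lambda>_. \<zero>)" using a \<phi> by (auto simp: K_def)
      then have "rho (conv x a) \<phi> y = rho x (\<lambda>_. \<zero>) y"
        using rho_mult[of x a \<phi>] carrierF_fs x ac \<phi> by simp
      also have "\<dots> = \<zero>" unfolding rho_def
        using LL_zero_fun[OF carrierF_fs[OF x]] by (simp add: T_zero)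
      finally show ?thesis .
    qed
    then show ?thesis using conv_carrier[OF x ac] by (simp add: K_def F_simps)
  qed
  show "a \<otimes>\<^bsub>F\<^esub> x \<in> K"
  proof -
    have "rho (conv a x) \<phi> y = \<zero>" if \<phi>: "\<forall>x. \<phi> x \<in> carrier R" for \<phi> y
    proof -
      have "rho (conv a x) \<phi> y = rho a (rho x \<phi>) y"
        using rho_mult[of a x \<phi>] carrierF_fs x ac \<phi> by simp
      also have "\<dots> = \<zero>" using a rho_carrier[OF carrierF_fs[OF x]] \<phi> by (simp add: K_def)
      finally show ?thesis .
    qed
    then show ?thesis using conv_carrier[OF ac x] by (simp add: K_def F_simps)
  qed
qed

end

context LPA_loc
begin

lemma good_Suc: "good x \<Longrightarrow> good (\<lambda>n. x (Suc n))"
  unfolding good_def by auto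

lemma good0: assumes "good x" "snd (x 0) = Some e" shows "e \<in> E1 \<and> s e = fst (x 0) \<and> fst (x (Suc 0)) = r e"
  using assms(1)[unfolded good_def, rule_format, of 0] assms(2) by simp

lemma good0N: assumes "good x" "snd (x 0) = None" shows "\<not> fne (fst (x 0))"
  using assms(1)[unfolded good_def, rule_format, of 0] assms(2) by simp

lemma pre_Suc[simp]: "(\<lambda>n. pre e y (Suc n)) = y"
  by (simp add: pre_def)

lemma pre_Suc_app[simp]: "pre e y (Suc n) = y n"
  by (simp add: pre_def)

lemma pre_0[simp]: "pre e y 0 = (s e, Some e)"
  by (simp add: pre_def)

lemma pre_shift: "snd (x 0) = Some e \<Longrightarrow> s e = fst (x 0) \<Longrightarrow> pre e (\<lambda>n. x (Suc n)) = x"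
  by (auto simp: pre_def fun_eq_iff prod_eq_iff split: nat.splits)

lemma good_pre: assumes "good y" "e \<in> E1" "fst (y 0) = r e" shows "good (pre e y)"
  unfolding good_def
proof
  fix n
  show "case snd (pre e y n) of None \<Rightarrow> \<not> fne (fst (pre e y n)) \<and> pre e y (Suc n) = pre e y n
        | Some ea \<Rightarrow> ea \<in> E1 \<and> s ea = fst (pre e y n) \<and> fst (pre e y (Suc n)) = r ea"
  proof (cases n)
    case 0 then show ?thesis using assms by simp
  next
    case (Suc m)
    show ?thesis using assms(1)[unfolded good_def, rule_format, of m] unfolding Suc pre_Suc_app .
  qed
qed

lemma rho_wmono:
  assumes c: "c \<in> carrier R" and \<phi>: "\<And>x. \<phi> x \<in> carrier R"
  shows "rho (wmono R w c) \<phi> x = c \<otimes> T w \<phi> x"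
proof -
  have "rho (wmono R w c) \<phi> x = finsum R (\<lambda>u. wmono R w c u \<otimes> T u \<phi> x) {w}"
    unfolding rho_def by (rule LL_sup) (use c T_carrier[of \<phi>, OF \<phi>] in \<open>auto simp: supp_def wmono_def\<close>)
  then show ?thesis using c T_carrier[of \<phi>, OF \<phi>] by (simp add: wmono_def)
qed

lemma rho_rel2:
  assumes w: "w1 \<noteq> w2" and \<phi>: "\<And>x. \<phi> x \<in> carrier R"
  shows "rho (rel2 R w1 w2) \<phi> x = T w1 \<phi> x \<oplus> \<ominus> T w2 \<phi> x"
proof -
  have Tc: "\<And>w. T w \<phi> x \<in> carrier R" using T_carrier[of \<phi>, OF \<phi>] by blast
  have "rho (rel2 R w1 w2) \<phi> x = finsum R (\<lambda>u. rel2 R w1 w2 u \<otimes> T u \<phi> x) {w1, w2}"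
    unfolding rho_def by (rule LL_sup) (use Tc in \<open>auto simp: supp_def rel2_def\<close>)
  also have "\<dots> = rel2 R w1 w2 w1 \<otimes> T w1 \<phi> x \<oplus> rel2 R w1 w2 w2 \<otimes> T w2 \<phi> x"
    using w Tc by (simp add: finsum_insert rel2_def)
  finally show ?thesis using w Tc by (simp add: rel2_def l_minus)
qed

lemma T_EdGh:
  "T [Ed f, Gh f] \<phi> x = (if good x \<and> snd (x 0) = Some f then \<phi> x else \<zero>)"
proof (cases "good x \<and> snd (x 0) = Some f")
  case True
  note g = good0[of x f] True
  have "pre f (\<lambda>n. x (Suc n)) = x" using pre_shift[of x f] g by simp
  then show ?thesis using True g good_Suc[of x] by simp
qed auto

lemma T_ck:
  assumes v: "fne v" and \<phi>: "\<And>x. \<phi> x \<in> carrier R"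
  shows "finsum R (\<lambda>f. T [Ed f, Gh f] \<phi> x) {f \<in> E1. s f = v} = T [V v] \<phi> x"
proof (cases "good x \<and> fst (x 0) = v")
  case True
  obtain f0 where f0: "snd (x 0) = Some f0"
    using good0N[of x] True v by (cases "snd (x 0)") auto
  have f0E: "f0 \<in> E1" "s f0 = v" using good0[of x f0] f0 True by auto
  have fin: "finite {f \<in> E1. s f = v}" using v by (simp add: fne_def)
  have "finsum R (\<lambda>f. T [Ed f, Gh f] \<phi> x) {f \<in> E1. s f = v}
      = finsum R (\<lambda>f. if f = f0 then \<phi> x else \<zero>) {f \<in> E1. s f = v}"
    by (rule add.finprod_cong') (use f0 True \<phi> in \<open>auto simp del: T_simps simp: T_EdGh\<close>)
  also have "\<dots> = \<phi> x"
    by (rule add.finprod_singleton_swap[where f="\<lambda>_. \<phi> x", simplified]) (use f0E fin \<phi> in auto)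
  finally show ?thesis using True by simp
next
  case False
  have "finsum R (\<lambda>f. T [Ed f, Gh f] \<phi> x) {f \<in> E1. s f = v} = \<zero>"
  proof (rule add.finprod_one_eqI)
    fix f assume f: "f \<in> {f \<in> E1. s f = v}"
    show "T [Ed f, Gh f] \<phi> x = \<zero>"
      using False good0[of x f] f by (auto simp del: T_simps simp: T_EdGh)
  qed
  then show ?thesis using False by auto
qed

lemma rho_ck:
  assumes v: "fne v" and \<phi>: "\<And>x. \<phi> x \<in> carrier R"
  shows "rho (ck_rel R E1 s v) \<phi> x = \<zero>"
proof -
  define Ev where "Ev = {f \<in> E1. s f = v}"
  have fin: "finite Ev" using v by (simp add: fne_def Ev_def)
  have Tc: "\<And>w. T w \<phi> x \<in> carrier R" using T_carrier[of \<phi>, OF \<phi>] by blast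
  have ckc: "ck_rel R E1 s v u \<in> carrier R" for u by (simp add: ck_rel_def)
  have nin: "[V v] \<notin> (\<lambda>f. [Ed f, Gh f]) ` Ev" by auto
  have "rho (ck_rel R E1 s v) \<phi> x = finsum R (\<lambda>u. ck_rel R E1 s v u \<otimes> T u \<phi> x) (insert [V v] ((\<lambda>f. [Ed f, Gh f]) ` Ev))"
    unfolding rho_def by (rule LL_sup) (use fin Tc ckc in \<open>auto simp: supp_def ck_rel_def Ev_def split: if_splits\<close>)
  also have "\<dots> = ck_rel R E1 s v [V v] \<otimes> T [V v] \<phi> x \<oplus> finsum R (\<lambda>u. ck_rel R E1 s v u \<otimes> T u \<phi> x) ((\<lambda>f. [Ed f, Gh f]) ` Ev)"
    by (rule finsum_insert) (use fin nin Tc ckc \<phi> in auto)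
  also have "finsum R (\<lambda>u. ck_rel R E1 s v u \<otimes> T u \<phi> x) ((\<lambda>f. [Ed f, Gh f]) ` Ev)
      = finsum R (\<lambda>f. ck_rel R E1 s v [Ed f, Gh f] \<otimes> T [Ed f, Gh f] \<phi> x) Ev"
    by (rule finsum_reindex) (use Tc ckc in \<open>auto simp: inj_on_def\<close>)
  also have "\<dots> = finsum R (\<lambda>f. T [Ed f, Gh f] \<phi> x) Ev"
    by (rule add.finprod_cong') (use Tc in \<open>auto simp del: T_simps simp: ck_rel_def Ev_def\<close>)
  also have "\<dots> = T [V v] \<phi> x" unfolding Ev_def by (rule T_ck[OF v \<phi>])
  finally show ?thesis using Tc \<phi>[of x] by (simp add: ck_rel_def l_minus l_neg)
qed

lemma rels_K: "leavitt_rels R E0 E1 s r \<subseteq> K"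
proof
  fix y assume y: "y \<in> leavitt_rels R E0 E1 s r"
  have yc: "y \<in> carrier F" using y rels_carrier by auto
  have "rho y \<phi> x = \<zero>" if \<phi>: "\<And>x. \<phi> x \<in> carrier R" for \<phi> x
  proof -
    have Tc: "\<And>w. T w \<phi> x \<in> carrier R" using T_carrier[of \<phi>, OF \<phi>] by blast
    have e2: "rho (rel2 R w1 w2) \<phi> x = \<zero>" if "w1 \<noteq> w2" "T w1 \<phi> x = T w2 \<phi> x" for w1 w2
      using rho_rel2[OF that(1) \<phi>] that Tc by (simp add: r_neg)
    have e1: "rho (wmono R w \<one>) \<phi> x = \<zero>" if "T w \<phi> x = \<zero>" for w
      using rho_wmono[OF one_closed \<phi>] that by simp
    from y show ?thesis unfolding leavitt_rels_def
    proof (elim UnE CollectE exE conjE)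
      fix v u assume "y = wmono R [V v, V u] \<one>" "v \<noteq> u"
      then show ?thesis using e1 by simp
    next
      fix v assume "y = rel2 R [V v, V v] [V v]"
      then show ?thesis using e2 by simp
    next
      fix f assume "y = rel2 R [V (s f), Ed f] [Ed f]"
      moreover have "T [V (s f), Ed f] \<phi> x = T [Ed f] \<phi> x" using good0[of x f] by auto
      ultimately show ?thesis using e2 by simp
    next
      fix f assume "y = rel2 R [Ed f, V (r f)] [Ed f]"
      moreover have "T [Ed f, V (r f)] \<phi> x = T [Ed f] \<phi> x" using good0[of x f] good_Suc[of x] by auto
      ultimately show ?thesis using e2 by simp
    next
      fix f assume "y = rel2 R [V (r f), Gh f] [Gh f]"
      then show ?thesis using e2 by simp
    next
      fix f assume "y = rel2 R [Gh f, V (s f)] [Gh f]"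
      moreover have "T [Gh f, V (s f)] \<phi> x = T [Gh f] \<phi> x" using good_pre[of x f] by auto
      ultimately show ?thesis using e2 by simp
    next
      fix f assume "y = rel2 R [Gh f, Ed f] [V (r f)]" "f \<in> E1"
      moreover have "T [Gh f, Ed f] \<phi> x = T [V (r f)] \<phi> x" using good_pre[of x f] \<open>f \<in> E1\<close> by auto
      ultimately show ?thesis using e2 by simp
    next
      fix f g assume "y = wmono R [Gh f, Ed g] \<one>" "f \<noteq> g"
      then show ?thesis using e1 by simp
    next
      fix v assume "y = ck_rel R E1 s v" "{f \<in> E1. s f = v} \<noteq> {}" "finite {f \<in> E1. s f = v}"
      then show ?thesis using rho_ck[OF _ \<phi>] by (simp add: fne_def)
    qed
  qed
  then show "y \<in> K" using yc by (simp add: K_def)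
qed

lemma I_K: "I \<subseteq> K"
proof -
  interpret FR: ring F by (rule ring_F)
  show ?thesis unfolding leavitt_ideal_def by (rule FR.genideal_minimal[OF K_ideal rels_K])
qed

end

context LPA_loc
begin

definition nxt :: "'v \<Rightarrow> 'e option" where
  "nxt v = (if fne v then Some (SOME e. e \<in> E1 \<and> s e = v) else None)"

definition stp :: "'v \<Rightarrow> 'v" where
  "stp v = (case nxt v of Some e \<Rightarrow> r e | None \<Rightarrow> v)"

definition gp :: "'v \<Rightarrow> nat \<Rightarrow> 'v \<times> 'e option" where
  "gp v = (\<lambda>n. ((stp ^^ n) v, nxt ((stp ^^ n) v)))"

lemma good_gp: "good (gp v)"
  unfolding good_def
proof
  fix n
  define u where "u = (stp ^^ n) v"
  have u: "gp v n = (u, nxt u)" "gp v (Suc n) = (stp u, nxt (stp u))" by (simp_all add: gp_def u_def)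
  show "case snd (gp v n) of None \<Rightarrow> \<not> fne (fst (gp v n)) \<and> gp v (Suc n) = gp v n
        | Some e \<Rightarrow> e \<in> E1 \<and> s e = fst (gp v n) \<and> fst (gp v (Suc n)) = r e"
  proof (cases "fne u")
    case True
    then have "\<exists>e. e \<in> E1 \<and> s e = u" by (auto simp: fne_def)
    then have "(SOME e. e \<in> E1 \<and> s e = u) \<in> E1 \<and> s (SOME e. e \<in> E1 \<and> s e = u) = u"
      by (rule someI_ex)
    then show ?thesis using True u by (simp add: nxt_def stp_def)
  next
    case False
    then show ?thesis using u by (simp add: nxt_def stp_def)
  qed
qed

lemma gp_0: "fst (gp v 0) = v" by (simp add: gp_def)

definition prep :: "'e list \<Rightarrow> (nat \<Rightarrow> 'v \<times> 'e option) \<Rightarrow> (nat \<Rightarrow> 'v \<times> 'e option)" where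
  "prep q y = foldr pre q y"

lemma good_prep:
  "chn q \<Longrightarrow> good y \<Longrightarrow> (q \<noteq> [] \<longrightarrow> fst (y 0) = r (last q)) \<Longrightarrow>
   good (prep q y) \<and> (q \<noteq> [] \<longrightarrow> fst (prep q y 0) = s (hd q))"
proof (induction q)
  case Nil then show ?case by (simp add: prep_def)
next
  case (Cons e q)
  have h: "e \<in> E1" "chn q" "q \<noteq> [] \<Longrightarrow> s (hd q) = r e" using Cons.prems by (auto simp: chn_Cons)
  have IH: "good (prep q y) \<and> (q \<noteq> [] \<longrightarrow> fst (prep q y 0) = s (hd q))"
    using Cons.IH h Cons.prems by auto
  have "fst (prep q y 0) = r e"
    using IH h Cons.prems by (cases "q = []") (auto simp: prep_def)
  then have "good (pre e (prep q y))" using good_pre IH h by blast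
  then show ?case by (simp add: prep_def)
qed

lemma T_Ed_prep: "good (prep q y) \<Longrightarrow> T (map Ed q @ w) \<phi> (prep q y) = T w \<phi> y"
proof (induction q)
  case Nil then show ?case by (simp add: prep_def)
next
  case (Cons e q)
  have g: "good (pre e (prep q y))" using Cons.prems by (simp add: prep_def)
  then have "good (prep q y)" using good_Suc[of "pre e (prep q y)"] by simp
  then show ?case using Cons.IH g by (simp add: prep_def)
qed

lemma T_Gh_prep:
  "chn q \<Longrightarrow> q \<noteq> [] \<Longrightarrow> good y \<Longrightarrow> fst (y 0) = r (last q) \<Longrightarrow> T (map Gh (rev q)) \<phi> y = \<phi> (prep q y)"
proof (induction q arbitrary: y rule: rev_induct)
  case Nil then show ?case by simp
next
  case (snoc e q)
  have h: "chn q" "e \<in> E1" "q \<noteq> [] \<Longrightarrow> s e = r (last q)" using snoc.prems by (auto simp: chn_append chn_Cons)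
  have fy: "fst (y 0) = r e" using snoc.prems by simp
  have T1: "T (map Gh (rev (q @ [e]))) \<phi> y = T (map Gh (rev q)) \<phi> (pre e y)"
    using snoc.prems h fy by simp
  show ?case
  proof (cases "q = []")
    case True then show ?thesis using T1 by (simp add: prep_def)
  next
    case False
    have "T (map Gh (rev q)) \<phi> (pre e y) = \<phi> (prep q (pre e y))"
      by (rule snoc.IH) (use h False good_pre[of y e] snoc.prems fy in auto)
    then show ?thesis using T1 by (simp add: prep_def)
  qed
qed

lemma nonvanish:
  assumes q: "q \<noteq> []" "chn q"
  shows "wmono R (map Ed q @ map Gh (rev q)) \<one> \<notin> I"
proof
  assume "wmono R (map Ed q @ map Gh (rev q)) \<one> \<in> I"
  then have K: "wmono R (map Ed q @ map Gh (rev q)) \<one> \<in> K" using I_K by auto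
  define y where "y = gp (r (last q))"
  have y: "good y" "fst (y 0) = r (last q)" using good_gp gp_0 by (auto simp: y_def)
  have gpr: "good (prep q y)" using good_prep[OF q(2) y(1)] y q by auto
  define \<phi> where "\<phi> = (\<lambda>z. if z = prep q y then \<one> else \<zero>)"
  have \<phi>c: "\<forall>x. \<phi> x \<in> carrier R" by (simp add: \<phi>_def)
  have "rho (wmono R (map Ed q @ map Gh (rev q)) \<one>) \<phi> (prep q y) = \<one> \<otimes> T (map Ed q @ map Gh (rev q)) \<phi> (prep q y)"
    by (rule rho_wmono) (use \<phi>c in auto)
  also have "\<dots> = \<one>"
    using T_Ed_prep[OF gpr] T_Gh_prep[OF q(2) q(1) y] by (simp add: \<phi>_def)
  finally show False using K \<phi>c one_nz by (auto simp: K_def)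
qed

end

locale NEfail = LPA_loc R E0 E1 s r
  for R :: "('r, 'm) ring_scheme" (structure) and E0 :: "'v set" and E1 :: "'e set"
    and s :: "'e \<Rightarrow> 'v" and r :: "'e \<Rightarrow> 'v" +
  fixes c :: "'e list" and f :: 'e and i :: nat
  assumes cne: "c \<noteq> []" and cch: "chn c" and cloop: "s (c ! 0) = r (last c)"
    and fE: "f \<in> E1" and il: "i < length c" and fsrc: "s f = s (c ! i)" and fneq: "f \<noteq> c ! i"
begin

definition P :: "nat \<Rightarrow> 'e list" where "P n = concat (replicate n c)"

lemma P_0[simp]: "P 0 = []" and P_Suc: "P (Suc n) = c @ P n"
  by (simp_all add: P_def)

lemma P_add: "P (m + k) = P m @ P k"
  by (simp add: P_def replicate_add)

lemma P_props: "n > 0 \<Longrightarrow> P n \<noteq> [] \<and> hd (P n) = c ! 0 \<and> last (P n) = last c"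
proof (induction n)
  case 0 then show ?case by simp
next
  case (Suc n)
  then show ?case using cne by (cases "n = 0") (auto simp: P_Suc hd_conv_nth nth_append)
qed

lemma chn_P: "chn (P n)"
proof (induction n)
  case (Suc n)
  show ?case
    using Suc cch P_props[of n] cloop cne by (cases "n = 0") (auto simp: P_Suc chn_append hd_conv_nth)
qed simp

lemma c0E: "c ! 0 \<in> E1" using cch cne chn_E1 by (auto simp: nth_mem subset_iff)

lemma chn_tl: "chn (take i c @ [f])"
proof -
  have ct: "chn (take i c)" using cch chn_append[of "take i c" "drop i c"] by simp
  have "s f = r (last (take i c))" if "take i c \<noteq> []"
  proof -
    have "i \<noteq> 0" using that by auto
    then obtain j where j: "i = Suc j" by (cases i) auto
    have "last (take i c) = c ! j" using j il that by (simp add: last_conv_nth)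
    moreover have "s (c ! Suc j) = r (c ! j)" using cch il j by (simp add: chn_def)
    ultimately show ?thesis using fsrc j by simp
  qed
  then show ?thesis using ct fE by (auto simp: chn_append chn_Cons)
qed

definition mu :: "nat \<Rightarrow> 'e list" where "mu n = P n @ take i c @ [f]"

lemma mu_ne: "mu n \<noteq> []" by (simp add: mu_def)

lemma hd_tl: "s (hd (take i c @ [f])) = s (c ! 0)"
  using fsrc cne by (cases i) (auto simp: hd_conv_nth nth_append)

lemma chn_mu: "chn (mu n)"
proof -
  have "s (hd (take i c @ [f])) = r (last (P n))" if "P n \<noteq> []"
    using that P_props[of n] hd_tl cloop by (cases n) auto
  then show ?thesis using chn_P chn_tl by (simp add: mu_def chn_append)
qed

lemma last_mu: "last (mu n) = f" by (simp add: mu_def)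

lemma hd_mu: "s (hd (mu n)) = s (c ! 0)"
  using P_props[of n] hd_tl by (cases n) (auto simp: mu_def)

abbreviation "vf \<equiv> r f"

lemma vfE: "vf \<in> E0" using fE rE0 by simp

lemma pto_mu: "pto vf (mu n)" using chn_mu last_mu mu_ne by (simp add: pto_def)

definition mup :: "nat \<Rightarrow> 'v \<times> 'e list" where "mup n = (s (c ! 0), mu n)"

lemma path_mup: "is_path E0 E1 s r (mup n)"
  using chn_mu mu_ne hd_mu c0E sE0 by (simp add: is_path_iff mup_def)

definition e :: "nat \<Rightarrow> (('v,'e) gen list \<Rightarrow> 'r) set" where
  "e n = cl (wmono R (pword (mup n) @ pword_star (mup n)) \<one>)"

lemma e_cw: "e n = cl (wmono R (cw vf (mu n) (mu n)) \<one>)"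
proof -
  have "weq (map Ed (mu n) @ map Gh (rev (mu n))) (cw vf (mu n) (mu n))"
    by (rule EG_cw) (use mu_ne chn_mu last_mu vfE in auto)
  then show ?thesis using weq_c[of _ _ \<one>] mu_ne by (simp add: e_def mup_def pword_def pword_star_def)
qed

lemma e_Bs: "e n \<in> Bs"
  unfolding e_cw Bs_def using vfE pto_mu by blast

lemma e_LPA0: "e n \<in> LPA0 R E0 E1 s r" using e_Bs Bs_LPA0 by auto

lemma e_carrier: "e n \<in> carrier L" using e_Bs Bs_carrier by auto

lemma e_nz: "e n \<noteq> \<zero>\<^bsub>L\<^esub>"
proof -
  have g: "set (map Ed (mu n) @ map Gh (rev (mu n))) \<subseteq> gens E0 E1" using chn_E1[OF chn_mu[of n]] by auto
  show ?thesis using nonvanish[OF mu_ne chn_mu] cl_zero_iff[OF wmono_carrier[OF g one_closed]] mu_ne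
    by (simp add: e_def mup_def pword_def pword_star_def)
qed

lemma e_mult: "e m \<otimes>\<^bsub>L\<^esub> e n = cl (wmono R (cw vf (mu m) (mu m) @ cw vf (mu n) (mu n)) \<one>)"
  using gw_cw[OF vfE pto_mu pto_mu] by (simp add: e_cw cl_mult wmono_carrier gw_def wmono_multF)

lemma e_idem: "e n \<otimes>\<^bsub>L\<^esub> e n = e n"
proof -
  have "weq (cw vf (mu n) (mu n) @ cw vf (mu n) (mu n)) (map Ed (mu n) @ [V vf] @ map Ed [] @ [V vf] @ map Gh (rev (mu n)))"
    by (rule caseI[OF vfE vfE pto_mu pto_mu pto_mu pto_mu]) simp
  also have "weq (map Ed (mu n) @ [V vf] @ map Ed [] @ [V vf] @ map Gh (rev (mu n))) (cw vf (mu n) (mu n))"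
    using weq_ctxI[OF R2[OF vfE], of "map Ed (mu n)" "map Gh (rev (mu n))"] chn_mu chn_E1
    by (simp add: cw_def)
  finally have W: "weq (cw vf (mu n) (mu n) @ cw vf (mu n) (mu n)) (cw vf (mu n) (mu n))" .
  show ?thesis unfolding e_mult using weq_c[OF W one_closed] by (simp add: e_cw)
qed

lemma mu_split: "m < n \<Longrightarrow> \<exists>p rest. mu m = p @ f # [] \<and> mu n = p @ (c ! i) # rest"
proof -
  assume "m < n"
  then obtain k where n: "n = m + Suc k" by (metis less_iff_Suc_add add_Suc_right)
  have c: "c = take i c @ c ! i # drop (Suc i) c" by (rule id_take_nth_drop[OF il])
  have Pn: "P n = P m @ c @ P k" unfolding n P_add P_Suc by (rule refl)
  have "mu n = P m @ c @ (P k @ take i c @ [f])" by (simp add: mu_def Pn)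
  also have "\<dots> = P m @ (take i c @ c ! i # drop (Suc i) c) @ (P k @ take i c @ [f])"
    using c by (rule arg_cong[where f="\<lambda>z. P m @ z @ (P k @ take i c @ [f])"])
  also have "\<dots> = (P m @ take i c) @ (c ! i) # (drop (Suc i) c @ P k @ take i c @ [f])"
    by simp
  finally have "mu n = (P m @ take i c) @ (c ! i) # (drop (Suc i) c @ P k @ take i c @ [f])" .
  moreover have "mu m = (P m @ take i c) @ f # []" by (simp add: mu_def)
  ultimately show ?thesis by blast
qed

lemma e_orth: "m \<noteq> n \<Longrightarrow> e m \<otimes>\<^bsub>L\<^esub> e n = \<zero>\<^bsub>L\<^esub>"
proof -
  assume mn: "m \<noteq> n"
  note C = caseIII[OF vfE vfE pto_mu[of m] pto_mu[of m] pto_mu[of n] pto_mu[of n]]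
  have "wz (cw vf (mu m) (mu m) @ cw vf (mu n) (mu n))"
  proof (cases "m < n")
    case True
    then obtain p rest where eq: "mu m = p @ f # []" "mu n = p @ (c ! i) # rest" using mu_split by blast
    show ?thesis by (rule C[OF eq fneq])
  next
    case False
    then have "n < m" using mn by simp
    then obtain p rest where eq: "mu n = p @ f # []" "mu m = p @ (c ! i) # rest" using mu_split by blast
    show ?thesis by (rule C[OF eq(2) eq(1) fneq[symmetric]])
  qed
  then show ?thesis unfolding e_mult using wz_c[OF _ one_closed] by simp
qed

lemma e_inj: "inj e"
proof
  fix m n assume h: "e m = e n"
  show "m = n"
  proof (rule ccontr)
    assume "m \<noteq> n"
    then have "e m \<otimes>\<^bsub>L\<^esub> e n = \<zero>\<^bsub>L\<^esub>" by (rule e_orth)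
    then have "e n \<otimes>\<^bsub>L\<^esub> e n = \<zero>\<^bsub>L\<^esub>" using h by simp
    then show False using e_idem e_nz by simp
  qed
qed

end

context LPA_loc
begin

lemma notNE_data:
  assumes "\<not> cond_NE E1 s r"
  shows "\<exists>c f i. c \<noteq> [] \<and> chn c \<and> s (c ! 0) = r (last c) \<and> f \<in> E1 \<and> i < length c \<and>
    s f = s (c ! i) \<and> f \<noteq> c ! i"
  using assms unfolding cond_NE_def is_cycle_def has_exit_def edge_path_chn by blast

lemma S_facts:
  "\<zero>\<^bsub>L\<^esub> \<in> LPA0 R E0 E1 s r"
  "x \<in> LPA0 R E0 E1 s r \<Longrightarrow> x \<in> carrier L"
  "x \<in> LPA0 R E0 E1 s r \<Longrightarrow> y \<in> LPA0 R E0 E1 s r \<Longrightarrow> x \<oplus>\<^bsub>L\<^esub> y \<in> LPA0 R E0 E1 s r"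
  "x \<in> LPA0 R E0 E1 s r \<Longrightarrow> \<ominus>\<^bsub>L\<^esub> x \<in> LPA0 R E0 E1 s r"
  "x \<in> LPA0 R E0 E1 s r \<Longrightarrow> y \<in> LPA0 R E0 E1 s r \<Longrightarrow> x \<otimes>\<^bsub>L\<^esub> y \<in> LPA0 R E0 E1 s r"
  unfolding LPA0_SS by (auto intro: SS.intros SS_carrier SS_neg SS_mult)

end

context NEfail
begin

definition Es :: "nat \<Rightarrow> (('v,'e) gen list \<Rightarrow> 'r) set" where
  "Es k = finsum L e {..<k}"

lemma Es_carrier: "Es k \<in> carrier L"
proof -
  interpret LR: ring L by (rule ring_L)
  show ?thesis unfolding Es_def using e_carrier by (auto intro: LR.finsum_closed)
qed

lemma Es_Suc: "Es (Suc k) = e k \<oplus>\<^bsub>L\<^esub> Es k"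
proof -
  interpret LR: ring L by (rule ring_L)
  show ?thesis unfolding Es_def using e_carrier by (simp add: lessThan_Suc Pi_def)
qed

lemma Es_e: "Es k \<otimes>\<^bsub>L\<^esub> e k = \<zero>\<^bsub>L\<^esub>"
proof -
  interpret LR: ring L by (rule ring_L)
  have "Es k \<otimes>\<^bsub>L\<^esub> e k = finsum L (\<lambda>j. e j \<otimes>\<^bsub>L\<^esub> e k) {..<k}"
    unfolding Es_def by (rule LR.finsum_ldistr) (use e_carrier in auto)
  also have "\<dots> = \<zero>\<^bsub>L\<^esub>" by (rule LR.add.finprod_one_eqI) (simp add: e_orth)
  finally show ?thesis .
qed

lemma e_Es: "e k \<otimes>\<^bsub>L\<^esub> Es k = \<zero>\<^bsub>L\<^esub>"
proof -
  interpret LR: ring L by (rule ring_L)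
  have "e k \<otimes>\<^bsub>L\<^esub> Es k = finsum L (\<lambda>j. e k \<otimes>\<^bsub>L\<^esub> e j) {..<k}"
    unfolding Es_def by (rule LR.finsum_rdistr) (use e_carrier in auto)
  also have "\<dots> = \<zero>\<^bsub>L\<^esub>" by (rule LR.add.finprod_one_eqI) (simp add: e_orth)
  finally show ?thesis .
qed

abbreviation S where "S \<equiv> LPA0 R E0 E1 s r"

definition JL :: "nat \<Rightarrow> (('v,'e) gen list \<Rightarrow> 'r) set set" where
  "JL k = {a \<in> S. a \<otimes>\<^bsub>L\<^esub> Es k = a}"

definition JR :: "nat \<Rightarrow> (('v,'e) gen list \<Rightarrow> 'r) set set" where
  "JR k = {a \<in> S. Es k \<otimes>\<^bsub>L\<^esub> a = a}"

lemma addsub: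
  assumes "\<And>a. a \<in> J \<longleftrightarrow> a \<in> S \<and> Q a"
    and "Q \<zero>\<^bsub>L\<^esub>" and "\<And>a b. a \<in> J \<Longrightarrow> b \<in> J \<Longrightarrow> Q (a \<oplus>\<^bsub>L\<^esub> b)"
    and "\<And>a. a \<in> J \<Longrightarrow> Q (\<ominus>\<^bsub>L\<^esub> a)"
  shows "additive_subgroup J L"
proof (rule additive_subgroupI)
  interpret LR: ring L by (rule ring_L)
  show "subgroup J (add_monoid L)"
  proof
    show "J \<subseteq> carrier (add_monoid L)" using assms(1) S_facts(2) by auto
    show "\<one>\<^bsub>add_monoid L\<^esub> \<in> J" using assms(1,2) S_facts(1) by simp
    fix a b assume "a \<in> J" "b \<in> J"
    then show "a \<otimes>\<^bsub>add_monoid L\<^esub> b \<in> J" using assms(1,3) S_facts(3) by simp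
  next
    fix a assume a: "a \<in> J"
    have "\<ominus>\<^bsub>L\<^esub> a \<in> J" using a assms(1,4) S_facts(4) by simp
    then show "inv\<^bsub>add_monoid L\<^esub> a \<in> J" unfolding a_inv_def .
  qed
qed

lemma JL_ideal: "left_ideal_of L S (JL k)"
proof -
  interpret LR: ring L by (rule ring_L)
  note Ec = Es_carrier[of k]
  have "additive_subgroup (JL k) L"
  proof (rule addsub[where Q="\<lambda>a. a \<otimes>\<^bsub>L\<^esub> Es k = a"])
    show "\<And>a. a \<in> JL k \<longleftrightarrow> a \<in> S \<and> a \<otimes>\<^bsub>L\<^esub> Es k = a" by (simp add: JL_def)
    show "\<zero>\<^bsub>L\<^esub> \<otimes>\<^bsub>L\<^esub> Es k = \<zero>\<^bsub>L\<^esub>" using Ec by simp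
    fix a b assume "a \<in> JL k" "b \<in> JL k"
    then show "(a \<oplus>\<^bsub>L\<^esub> b) \<otimes>\<^bsub>L\<^esub> Es k = a \<oplus>\<^bsub>L\<^esub> b"
      using Ec S_facts(2) by (simp add: JL_def LR.l_distr)
  next
    fix a assume "a \<in> JL k"
    then show "(\<ominus>\<^bsub>L\<^esub> a) \<otimes>\<^bsub>L\<^esub> Es k = \<ominus>\<^bsub>L\<^esub> a"
      using Ec S_facts(2) by (simp add: JL_def LR.l_minus)
  qed
  moreover have "x \<otimes>\<^bsub>L\<^esub> a \<in> JL k" if "x \<in> S" "a \<in> JL k" for x a
    using that Ec S_facts(2,5) by (simp add: JL_def LR.m_assoc)
  ultimately show ?thesis by (auto simp: left_ideal_of_def JL_def)
qed

lemma JR_ideal: "right_ideal_of L S (JR k)"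
proof -
  interpret LR: ring L by (rule ring_L)
  note Ec = Es_carrier[of k]
  have "additive_subgroup (JR k) L"
  proof (rule addsub[where Q="\<lambda>a. Es k \<otimes>\<^bsub>L\<^esub> a = a"])
    show "\<And>a. a \<in> JR k \<longleftrightarrow> a \<in> S \<and> Es k \<otimes>\<^bsub>L\<^esub> a = a" by (simp add: JR_def)
    show "Es k \<otimes>\<^bsub>L\<^esub> \<zero>\<^bsub>L\<^esub> = \<zero>\<^bsub>L\<^esub>" using Ec by simp
    fix a b assume "a \<in> JR k" "b \<in> JR k"
    then show "Es k \<otimes>\<^bsub>L\<^esub> (a \<oplus>\<^bsub>L\<^esub> b) = a \<oplus>\<^bsub>L\<^esub> b"
      using Ec S_facts(2) by (simp add: JR_def LR.r_distr)
  next
    fix a assume "a \<in> JR k"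
    then show "Es k \<otimes>\<^bsub>L\<^esub> (\<ominus>\<^bsub>L\<^esub> a) = \<ominus>\<^bsub>L\<^esub> a"
      using Ec S_facts(2) by (simp add: JR_def LR.r_minus)
  qed
  moreover have "a \<otimes>\<^bsub>L\<^esub> x \<in> JR k" if "x \<in> S" "a \<in> JR k" for x a
    using that Ec S_facts(2,5) by (simp add: JR_def LR.m_assoc[symmetric])
  ultimately show ?thesis by (auto simp: right_ideal_of_def JR_def)
qed

lemma JL_mono: "JL k \<subseteq> JL (Suc k)"
proof
  interpret LR: ring L by (rule ring_L)
  fix a assume a: "a \<in> JL k"
  have ac: "a \<in> carrier L" using a S_facts(2) by (simp add: JL_def)
  have "a \<otimes>\<^bsub>L\<^esub> e k = (a \<otimes>\<^bsub>L\<^esub> Es k) \<otimes>\<^bsub>L\<^esub> e k" using a by (simp add: JL_def)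
  also have "\<dots> = \<zero>\<^bsub>L\<^esub>" using ac Es_carrier e_carrier by (simp add: LR.m_assoc Es_e)
  finally have "a \<otimes>\<^bsub>L\<^esub> Es (Suc k) = a"
    using a ac Es_carrier e_carrier by (simp add: Es_Suc LR.r_distr JL_def)
  then show "a \<in> JL (Suc k)" using a by (simp add: JL_def)
qed

lemma JR_mono: "JR k \<subseteq> JR (Suc k)"
proof
  interpret LR: ring L by (rule ring_L)
  fix a assume a: "a \<in> JR k"
  have ac: "a \<in> carrier L" using a S_facts(2) by (simp add: JR_def)
  have "e k \<otimes>\<^bsub>L\<^esub> a = e k \<otimes>\<^bsub>L\<^esub> (Es k \<otimes>\<^bsub>L\<^esub> a)" using a by (simp add: JR_def)
  also have "\<dots> = \<zero>\<^bsub>L\<^esub>" using ac Es_carrier e_carrier by (simp add: LR.m_assoc[symmetric] e_Es)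
  finally have "Es (Suc k) \<otimes>\<^bsub>L\<^esub> a = a"
    using a ac Es_carrier e_carrier by (simp add: Es_Suc LR.l_distr JR_def)
  then show "a \<in> JR (Suc k)" using a by (simp add: JR_def)
qed

lemma e_JL: "e k \<in> JL (Suc k) \<and> e k \<notin> JL k"
proof -
  interpret LR: ring L by (rule ring_L)
  have "e k \<otimes>\<^bsub>L\<^esub> Es (Suc k) = e k"
    using Es_carrier e_carrier by (simp add: Es_Suc LR.r_distr e_idem e_Es)
  then show ?thesis using e_LPA0 e_Es e_nz[of k, THEN not_sym] by (simp add: JL_def)
qed

lemma e_JR: "e k \<in> JR (Suc k) \<and> e k \<notin> JR k"
proof -
  interpret LR: ring L by (rule ring_L)
  have "Es (Suc k) \<otimes>\<^bsub>L\<^esub> e k = e k"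
    using Es_carrier e_carrier by (simp add: Es_Suc LR.l_distr e_idem Es_e)
  then show ?thesis using e_LPA0 Es_e e_nz[of k, THEN not_sym] by (simp add: JR_def)
qed

lemma not_left: "\<not> left_noetherian L S"
proof
  assume "left_noetherian L S"
  then have "(\<forall>n. left_ideal_of L S (JL n)) \<and> (\<forall>n. JL n \<subseteq> JL (Suc n)) \<longrightarrow> (\<exists>N. \<forall>n\<ge>N. JL n = JL N)"
    unfolding left_noetherian_def by (rule spec)
  moreover have "(\<forall>n. left_ideal_of L S (JL n)) \<and> (\<forall>n. JL n \<subseteq> JL (Suc n))"
    using JL_ideal JL_mono by blast
  ultimately obtain N where N: "\<forall>n\<ge>N. JL n = JL N" by blast
  then have "JL (Suc N) = JL N" using le_SucI[OF order_refl] by blast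
  then show False using e_JL[of N] by blast
qed

lemma not_right: "\<not> right_noetherian L S"
proof
  assume "right_noetherian L S"
  then have "(\<forall>n. right_ideal_of L S (JR n)) \<and> (\<forall>n. JR n \<subseteq> JR (Suc n)) \<longrightarrow> (\<exists>N. \<forall>n\<ge>N. JR n = JR N)"
    unfolding right_noetherian_def by (rule spec)
  moreover have "(\<forall>n. right_ideal_of L S (JR n)) \<and> (\<forall>n. JR n \<subseteq> JR (Suc n))"
    using JR_ideal JR_mono by blast
  ultimately obtain N where N: "\<forall>n\<ge>N. JR n = JR N" by blast
  then have "JR (Suc N) = JR N" using le_SucI[OF order_refl] by blast
  then show False using e_JR[of N] by blast
qed

lemma main:
  "(\<exists>\<mu> :: nat \<Rightarrow> 'v \<times> 'e list.
            (\<forall>n. is_path E0 E1 s r (\<mu> n)) \<and>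
            (\<forall>n. cls R E0 E1 s r (wmono R (pword (\<mu> n) @ pword_star (\<mu> n)) \<one>\<^bsub>R\<^esub>)
                   \<in> LPA0 R E0 E1 s r) \<and>
            (\<forall>n. cls R E0 E1 s r (wmono R (pword (\<mu> n) @ pword_star (\<mu> n)) \<one>\<^bsub>R\<^esub>)
                   \<otimes>\<^bsub>LPA R E0 E1 s r\<^esub>
                 cls R E0 E1 s r (wmono R (pword (\<mu> n) @ pword_star (\<mu> n)) \<one>\<^bsub>R\<^esub>)
               = cls R E0 E1 s r (wmono R (pword (\<mu> n) @ pword_star (\<mu> n)) \<one>\<^bsub>R\<^esub>)) \<and>
            inj (\<lambda>n. cls R E0 E1 s r (wmono R (pword (\<mu> n) @ pword_star (\<mu> n)) \<one>\<^bsub>R\<^esub>)) \<and>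
            (\<forall>m n. m \<noteq> n \<longrightarrow>
               cls R E0 E1 s r (wmono R (pword (\<mu> m) @ pword_star (\<mu> m)) \<one>\<^bsub>R\<^esub>)
                   \<otimes>\<^bsub>LPA R E0 E1 s r\<^esub>
                 cls R E0 E1 s r (wmono R (pword (\<mu> n) @ pword_star (\<mu> n)) \<one>\<^bsub>R\<^esub>)
               = \<zero>\<^bsub>LPA R E0 E1 s r\<^esub>))
         \<and> \<not> left_noetherian (LPA R E0 E1 s r) (LPA0 R E0 E1 s r)
         \<and> \<not> right_noetherian (LPA R E0 E1 s r) (LPA0 R E0 E1 s r)"
proof -
  have ee: "(\<lambda>n. cls R E0 E1 s r (wmono R (pword (mup n) @ pword_star (mup n)) \<one>)) = e"
    by (simp add: fun_eq_iff e_def)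
  have e_eq: "\<And>n. cls R E0 E1 s r (wmono R (pword (mup n) @ pword_star (mup n)) \<one>) = e n"
    by (simp add: e_def)
  show ?thesis
    apply (intro conjI not_left not_right)
    apply (rule exI[of _ mup])
    unfolding e_eq ee
    apply (intro conjI allI impI)
        apply (rule path_mup)
       apply (rule e_LPA0)
      apply (rule e_idem)
     apply (rule e_inj)
    apply (erule e_orth)
    done
qed

end

theorem proposition4p7:
  fixes R :: "('r, 'm) ring_scheme"
    and E0 :: "'v set" and E1 :: "'e set" and s r :: "'e \<Rightarrow> 'v"
  assumes "ring R" and "\<one>\<^bsub>R\<^esub> \<noteq> \<zero>\<^bsub>R\<^esub>"
    and "graph E0 E1 s r"
    and "\<not> cond_NE E1 s r"
  shows "(\<exists>\<mu> :: nat \<Rightarrow> 'v \<times> 'e list.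
            (\<forall>n. is_path E0 E1 s r (\<mu> n)) \<and>
            (\<forall>n. cls R E0 E1 s r (wmono R (pword (\<mu> n) @ pword_star (\<mu> n)) \<one>\<^bsub>R\<^esub>)
                   \<in> LPA0 R E0 E1 s r) \<and>
            (\<forall>n. cls R E0 E1 s r (wmono R (pword (\<mu> n) @ pword_star (\<mu> n)) \<one>\<^bsub>R\<^esub>)
                   \<otimes>\<^bsub>LPA R E0 E1 s r\<^esub>
                 cls R E0 E1 s r (wmono R (pword (\<mu> n) @ pword_star (\<mu> n)) \<one>\<^bsub>R\<^esub>)
               = cls R E0 E1 s r (wmono R (pword (\<mu> n) @ pword_star (\<mu> n)) \<one>\<^bsub>R\<^esub>)) \<and>
            inj (\<lambda>n. cls R E0 E1 s r (wmono R (pword (\<mu> n) @ pword_star (\<mu> n)) \<one>\<^bsub>R\<^esub>)) \<and>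
            (\<forall>m n. m \<noteq> n \<longrightarrow>
               cls R E0 E1 s r (wmono R (pword (\<mu> m) @ pword_star (\<mu> m)) \<one>\<^bsub>R\<^esub>)
                   \<otimes>\<^bsub>LPA R E0 E1 s r\<^esub>
                 cls R E0 E1 s r (wmono R (pword (\<mu> n) @ pword_star (\<mu> n)) \<one>\<^bsub>R\<^esub>)
               = \<zero>\<^bsub>LPA R E0 E1 s r\<^esub>))
         \<and> \<not> left_noetherian (LPA R E0 E1 s r) (LPA0 R E0 E1 s r)
         \<and> \<not> right_noetherian (LPA R E0 E1 s r) (LPA0 R E0 E1 s r)"
proof -
  interpret LP: LPA_loc R E0 E1 s r
    by (rule LPA_loc.intro[OF assms(1) LPA_loc_axioms.intro[OF assms(2,3)]])
  obtain c f i where h: "c \<noteq> []" "LP.chn c" "s (c ! 0) = r (last c)" "f \<in> E1" "i < length c"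
    "s f = s (c ! i)" "f \<noteq> c ! i"
    using LP.notNE_data[OF assms(4)] by blast
  interpret N: NEfail R E0 E1 s r c f i
    by (rule NEfail.intro[OF LP.LPA_loc_axioms NEfail_axioms.intro[OF h]])
  show ?thesis by (rule N.main)
qed

end
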